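(* Let $V$ be a vertex operator algebra, $z\in\mathbb C^\times$, $W_1,W_2,W_3$ generalized $V$-modules, and $F$ a quasi-$P(z)$-intertwining map of type $\binom{W_3}{W_1\,W_2}$. Then the generalized $V$-module $F^\vee(W_3')\subset(W_1\otimes W_2)^*$ (ordinary if $W_3$ is ordinary) is $P(z)$-compatible if and only if $F$ is a $P(z)$-intertwining map.
   Context: $V$ is a vertex operator algebra. A generalized $V$-module is a weak $V$-module $W=\coprod_{n\in\mathbb C}W_{[n]}$ with $W_{[n]}$ the generalized $L(0)$-eigenspace of eigenvalue $n$, each finite-dimensional, $W_{[n+k]}=0$ for integers $k$ sufficiently negative; ordinary if $L(0)$ is semisimple. $\overline W=\prod_nW_{[n]}$; $W'$ is the contragredient module, $\langle Y'(v,x)\alpha,w\rangle=\langle\alpha,Y(e^{xL(1)}(-x^{-2})^{L(0)}v,x^{-1})w\rangle$. A quasi-$P(z)$-intertwining map of type $\binom{W_3}{W_1\,W_2}$ is a linear $F:W_1\otimes W_2\to\overline W_3$ with $Y_3(v,x_1)F(w_{(1)}\otimes w_{(2)})-F(w_{(1)}\otimes Y_2(v,x_1)w_{(2)})=\mathrm{Res}_{x_0}z^{-1}\delta(\frac{x_1-x_0}{z})F(Y_1(v,x_0)w_{(1)}\otimes w_{(2)})$ for all $v\in V,w_{(1)}\in W_1,w_{(2)}\in W_2$. It is a $P(z)$-intertwining map if moreover $x_0^{-1}\delta(\frac{x_1-z}{x_0})Y_3(v,x_1)F(w_{(1)}\otimes w_{(2)})=z^{-1}\delta(\frac{x_1-x_0}{z})F(Y_1(v,x_0)w_{(1)}\otimes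 w_{(2)})+x_0^{-1}\delta(\frac{z-x_1}{-x_0})F(w_{(1)}\otimes Y_2(v,x_1)w_{(2)})$. $F^\vee(\alpha)(w_{(1)}\otimes w_{(2)})=\langle\alpha,F(w_{(1)}\otimes w_{(2)})\rangle$. For $v\in V$, $\lambda\in(W_1\otimes W_2)^*$, define $\tau_{P(z)}\big(x_0^{-1}\delta(\frac{x_1^{-1}-z}{x_0})Y_t(v,x_1)\big)\lambda$ as the functional $w_{(1)}\otimes w_{(2)}\mapsto z^{-1}\delta(\frac{x_1^{-1}-x_0}{z})\lambda(Y_1(e^{x_1L(1)}(-x_1^{-2})^{L(0)}v,x_0)w_{(1)}\otimes w_{(2)})+x_0^{-1}\delta(\frac{z-x_1^{-1}}{-x_0})\lambda(w_{(1)}\otimes Y_2(e^{x_1L(1)}(-x_1^{-2})^{L(0)}v,x_1^{-1})w_{(2)})$, and $\tau_{P(z)}(Y_t(v,x_1))\lambda$ as its residue in $x_0$; $V\otimes\mathbb C[t,t^{-1}]$ acts by letting $v\otimes t^n$ act as the coefficient of $x_1^{-n-1}$ in $\tau_{P(z)}(Y_t(v,x_1))$, and $F^\vee(W_3')$ is a $V$-module under this action. $\lambda$ satisfies the $P(z)$-compatibility condition if for each $v$, $\tau_{P(z)}(v\otimes t^n)\lambda=0$ for $n\gg0$ and $\tau_{P(z)}\big(x_0^{-1}\delta(\frac{x_1^{-1}-z}{x_0})Y_t(v,x_1)\big)\lambda=x_0^{-1}\delta(\frac{x_1^{-1}-z}{x_0})\tau_{P(z)}(Y_t(v,x_1))\lambda$.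 A subspace is $P(z)$-compatible if all its elements satisfy this condition. *)

theory Defs
  imports Complex_Main
begin

class cvs = ab_group_add +
  fixes scaleC :: "complex \<Rightarrow> 'a \<Rightarrow> 'a" (infixr \<open>*\<^sub>C\<close> 75)
  assumes scaleC_add_right: "c *\<^sub>C (x + y) = c *\<^sub>C x + c *\<^sub>C y"
    and scaleC_add_left: "(b + c) *\<^sub>C x = b *\<^sub>C x + c *\<^sub>C x"
    and scaleC_scaleC: "b *\<^sub>C (c *\<^sub>C x) = (b * c) *\<^sub>C x"
    and scaleC_one: "1 *\<^sub>C x = x"

instantiation complex :: cvs
begin
definition scaleC_complex :: "complex \<Rightarrow> complex \<Rightarrow> complex" where
  "scaleC_complex c x = c * x"
instance by standard (auto simp: scaleC_complex_def algebra_simps)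
end

definition clinear :: "('a::cvs \<Rightarrow> 'b::cvs) \<Rightarrow> bool" where
  "clinear f \<longleftrightarrow> (\<forall>x y. f (x + y) = f x + f y) \<and> (\<forall>c x. f (c *\<^sub>C x) = c *\<^sub>C f x)"

definition cspan :: "'a::cvs set \<Rightarrow> 'a set" where
  "cspan S = {x. \<exists>B c. finite B \<and> B \<subseteq> S \<and> x = (\<Sum>b\<in>B. c b *\<^sub>C b)}"

definition fin_dim :: "'a::cvs set \<Rightarrow> bool" where
  "fin_dim S \<longleftrightarrow> (\<exists>B. finite B \<and> S \<subseteq> cspan B)"

text \<open>Sum of a finitely supported family (0 if the support is infinite; in all uses
  below the support is finite).\<close>
definition fsum :: "('i \<Rightarrow> 'a::comm_monoid_add) \<Rightarrow> 'a" where
  "fsum f = (if finite {i. f i \<noteq> 0} then (\<Sum>i\<in>{i. f i \<noteq> 0}. f i) else 0)"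

definition dproj :: "('i \<Rightarrow> 'a::cvs set) \<Rightarrow> 'i \<Rightarrow> 'a \<Rightarrow> 'a" where
  "dproj E i w = (THE u. u \<in> E i \<and> w - u \<in> cspan (\<Union>j\<in>-{i}. E j))"

text \<open>A vertex operator is encoded by its modes: \<open>Y v m w = v\<^sub>m w\<close>, i.e.
  \<open>Y(v,x)w = \<Sum>\<^sub>m (Y v m w) x\<^sup>-\<^sup>m\<^sup>-\<^sup>1\<close>. The Jacobi identity is written in its
  component form (coefficient of \<open>x\<^sub>0\<^sup>-\<^sup>l\<^sup>-\<^sup>1 x\<^sub>1\<^sup>-\<^sup>m\<^sup>-\<^sup>1 x\<^sub>2\<^sup>-\<^sup>n\<^sup>-\<^sup>1\<close>), the Borcherds identity.\<close>

definition bilinear_op :: "('v::cvs \<Rightarrow> int \<Rightarrow> 'w::cvs \<Rightarrow> 'w) \<Rightarrow> bool" where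
  "bilinear_op Y \<longleftrightarrow> (\<forall>m. (\<forall>v. clinear (\<lambda>w. Y v m w)) \<and> (\<forall>w. clinear (\<lambda>v. Y v m w)))"

definition borcherds :: "('v::cvs \<Rightarrow> int \<Rightarrow> 'v \<Rightarrow> 'v) \<Rightarrow> ('v \<Rightarrow> int \<Rightarrow> 'w::cvs \<Rightarrow> 'w) \<Rightarrow> bool" where
  "borcherds Y YW \<longleftrightarrow> (\<forall>u v w l m n.
     fsum (\<lambda>i::nat. ((of_int m :: complex) gchoose i) *\<^sub>C YW (Y u (l + int i) v) (m + n - int i) w)
   = fsum (\<lambda>i::nat. ((-1) ^ i * ((of_int l :: complex) gchoose i)) *\<^sub>C
        (YW u (l + m - int i) (YW v (n + int i) w)
         - ((-1) powi l) *\<^sub>C YW v (l + n - int i) (YW u (m + int i) w))))"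

definition Vgr :: "('v::cvs \<Rightarrow> int \<Rightarrow> 'v \<Rightarrow> 'v) \<Rightarrow> 'v \<Rightarrow> int \<Rightarrow> 'v set" where
  "Vgr Y om n = {v. Y om 1 v = of_int n *\<^sub>C v}"  \<comment> \<open>\<open>V\<^sub>(\<^sub>n\<^sub>)\<close>: \<open>L(0) = \<omega>\<^sub>1\<close> acts as n\<close>

definition VOA :: "('v::cvs \<Rightarrow> int \<Rightarrow> 'v \<Rightarrow> 'v) \<Rightarrow> 'v \<Rightarrow> 'v \<Rightarrow> complex \<Rightarrow> bool" where
  "VOA Y vac om c \<longleftrightarrow>
     bilinear_op Y
   \<and> (\<forall>u v. \<exists>N. \<forall>m\<ge>N. Y u m v = 0)
   \<and> (\<forall>m v. Y vac m v = (if m = -1 then v else 0))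
   \<and> (\<forall>v m. m \<ge> 0 \<longrightarrow> Y v m vac = 0) \<and> (\<forall>v. Y v (-1) vac = v)
   \<and> borcherds Y Y
   \<and> (\<forall>m n v. Y om (m + 1) (Y om (n + 1) v) - Y om (n + 1) (Y om (m + 1) v)
        = of_int (m - n) *\<^sub>C Y om (m + n + 1) v
          + (if m + n = 0 then (of_int (m ^ 3 - m) / 12 * c) *\<^sub>C v else 0))
   \<and> (\<forall>u m w. Y (Y om 0 u) m w = (- of_int m) *\<^sub>C Y u (m - 1) w)
   \<and> (\<forall>v. v \<in> cspan (\<Union>n. Vgr Y om n))
   \<and> (\<forall>n. fin_dim (Vgr Y om n))
   \<and> (\<exists>K. \<forall>n<K. Vgr Y om n = {0})
   \<and> vac \<in> Vgr Y om 0 \<and> om \<in> Vgr Y om 2"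

definition gen_eig :: "('w::cvs \<Rightarrow> 'w) \<Rightarrow> complex \<Rightarrow> 'w set" where
  "gen_eig L0 n = {w. \<exists>k. ((\<lambda>x. L0 x - n *\<^sub>C x) ^^ k) w = 0}"

definition Wgr :: "('v \<Rightarrow> int \<Rightarrow> 'w::cvs \<Rightarrow> 'w) \<Rightarrow> 'v \<Rightarrow> complex \<Rightarrow> 'w set" where
  "Wgr YW om n = gen_eig (YW om 1) n"

text \<open>Generalized V-module (the whole type 'w is the module): a weak module
  (lower truncation, vacuum property, Jacobi identity) graded by generalized
  \<open>L(0)\<close>-eigenspaces, finite-dimensional and lower-truncated.\<close>
definition gen_module :: "('v::cvs \<Rightarrow> int \<Rightarrow> 'v \<Rightarrow> 'v) \<Rightarrow> 'v \<Rightarrow> 'v \<Rightarrow> ('v \<Rightarrow> int \<Rightarrow> 'w::cvs \<Rightarrow> 'w) \<Rightarrow> bool" where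
  "gen_module Y vac om YW \<longleftrightarrow>
     bilinear_op YW
   \<and> (\<forall>v w. \<exists>N. \<forall>m\<ge>N. YW v m w = 0)
   \<and> (\<forall>m w. YW vac m w = (if m = -1 then w else 0))
   \<and> borcherds Y YW
   \<and> (\<forall>w. w \<in> cspan (\<Union>n. Wgr YW om n))
   \<and> (\<forall>n. fin_dim (Wgr YW om n))
   \<and> (\<forall>n. \<exists>K. \<forall>k::int. k < K \<longrightarrow> Wgr YW om (n + of_int k) = {0})"

text \<open>\<open>\<overline>W = \<Prod>\<^sub>n W\<^sub>[\<^sub>n\<^sub>]\<close>: families of homogeneous components.\<close>
definition Wbar :: "('v \<Rightarrow> int \<Rightarrow> 'w::cvs \<Rightarrow> 'w) \<Rightarrow> 'v \<Rightarrow> (complex \<Rightarrow> 'w) set" where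
  "Wbar YW om = {f. \<forall>n. f n \<in> Wgr YW om n}"

definition bar_mode :: "('v \<Rightarrow> int \<Rightarrow> 'w::cvs \<Rightarrow> 'w) \<Rightarrow> 'v \<Rightarrow> 'v \<Rightarrow> int \<Rightarrow> (complex \<Rightarrow> 'w) \<Rightarrow> (complex \<Rightarrow> 'w)" where
  "bar_mode YW om v m f = (\<lambda>k. fsum (\<lambda>p. dproj (Wgr YW om) k (YW v m (f p))))"

text \<open>Contragredient space \<open>W' = \<Oplus>\<^sub>n W\<^sub>[\<^sub>n\<^sub>]\<^sup>*\<close> as functionals on W vanishing on all
  but finitely many \<open>W\<^sub>[\<^sub>n\<^sub>]\<close>, and its pairing with \<open>\<overline>W\<close>.\<close>
definition gdual :: "('v \<Rightarrow> int \<Rightarrow> 'w::cvs \<Rightarrow> 'w) \<Rightarrow> 'v \<Rightarrow> ('w \<Rightarrow> complex) set" where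
  "gdual YW om = {\<alpha>. clinear \<alpha> \<and> finite {n. \<exists>w\<in>Wgr YW om n. \<alpha> w \<noteq> 0}}"

definition pair :: "('w \<Rightarrow> complex) \<Rightarrow> (complex \<Rightarrow> 'w) \<Rightarrow> complex" where
  "pair \<alpha> f = fsum (\<lambda>n. \<alpha> (f n))"

text \<open>A series is a coefficient function on exponent pairs (power of \<open>x\<^sub>0\<close>, power of \<open>x\<^sub>1\<close>).
  A monomial \<open>(c,(p,q))\<close> stands for \<open>c x\<^sub>0\<^sup>p x\<^sub>1\<^sup>q\<close>.
  \<open>delta_ser P A B D\<close> is \<open>P \<cdot> \<delta>((A+B)/D) = P \<Sum>\<^sub>n\<^sub>\<in>\<^sub>\<int> D\<^sup>-\<^sup>n (A+B)\<^sup>n\<close>, where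
  \<open>(A+B)\<^sup>n\<close> is expanded in nonnegative powers of the second summand B.\<close>

type_synonym mono = "complex \<times> (int \<times> int)"

definition delta_ser :: "mono \<Rightarrow> mono \<Rightarrow> mono \<Rightarrow> mono \<Rightarrow> int \<times> int \<Rightarrow> complex" where
  "delta_ser P A B D t = fsum (\<lambda>(n::int, i::nat).
     if fst (snd P) - n * fst (snd D) + (n - int i) * fst (snd A) + int i * fst (snd B) = fst t
      \<and> snd (snd P) - n * snd (snd D) + (n - int i) * snd (snd A) + int i * snd (snd B) = snd t
     then fst P * (fst D) powi (-n) * ((of_int n :: complex) gchoose i) * (fst A) powi (n - int i) * (fst B) ^ i
     else 0)"

definition ser_mult :: "(int \<times> int \<Rightarrow> complex) \<Rightarrow> (int \<times> int \<Rightarrow> 'm::cvs) \<Rightarrow> int \<times> int \<Rightarrow> 'm" where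
  "ser_mult d g t = fsum (\<lambda>s. d s *\<^sub>C g (fst t - fst s, snd t - snd s))"

definition bar_mult :: "(int \<times> int \<Rightarrow> complex) \<Rightarrow> (int \<times> int \<Rightarrow> complex \<Rightarrow> 'm::cvs) \<Rightarrow> int \<times> int \<Rightarrow> complex \<Rightarrow> 'm" where
  "bar_mult d g t = (\<lambda>k. ser_mult d (\<lambda>s. g s k) t)"

definition x0m :: mono where "x0m = (1, (1, 0))"
definition x1m :: mono where "x1m = (1, (0, 1))"
definition x1invm :: mono where "x1invm = (1, (0, -1))"
definition cm :: "complex \<Rightarrow> mono" where "cm c = (c, (0, 0))"
definition negm :: "mono \<Rightarrow> mono" where "negm a = (- fst a, snd a)"
definition invm :: "mono \<Rightarrow> mono" where "invm a = (inverse (fst a), (- fst (snd a), - snd (snd a)))"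

text \<open>F : \<open>W\<^sub>1 \<otimes> W\<^sub>2 \<rightarrow> \<overline>W\<^sub>3\<close> is encoded as a bilinear map \<open>W\<^sub>1 \<times> W\<^sub>2 \<rightarrow> \<overline>W\<^sub>3\<close>.\<close>
definition bar_map :: "('v \<Rightarrow> int \<Rightarrow> 'c::cvs \<Rightarrow> 'c) \<Rightarrow> 'v \<Rightarrow> ('a::cvs \<Rightarrow> 'b::cvs \<Rightarrow> complex \<Rightarrow> 'c) \<Rightarrow> bool" where
  "bar_map Y3 om F \<longleftrightarrow> (\<forall>w1 w2. F w1 w2 \<in> Wbar Y3 om)
     \<and> (\<forall>k. (\<forall>w1. clinear (\<lambda>w2. F w1 w2 k)) \<and> (\<forall>w2. clinear (\<lambda>w1. F w1 w2 k)))"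

definition quasi_intw :: "'v::cvs \<Rightarrow> complex \<Rightarrow> ('v \<Rightarrow> int \<Rightarrow> 'a::cvs \<Rightarrow> 'a) \<Rightarrow> ('v \<Rightarrow> int \<Rightarrow> 'b::cvs \<Rightarrow> 'b)
    \<Rightarrow> ('v \<Rightarrow> int \<Rightarrow> 'c::cvs \<Rightarrow> 'c) \<Rightarrow> ('a \<Rightarrow> 'b \<Rightarrow> complex \<Rightarrow> 'c) \<Rightarrow> bool" where
  "quasi_intw om z Y1 Y2 Y3 F \<longleftrightarrow> bar_map Y3 om F \<and>
    (\<forall>v w1 w2 k. \<comment> \<open>coefficient of \<open>x\<^sub>1\<^sup>k\<close>\<close>
       (\<lambda>n. bar_mode Y3 om v (-k-1) (F w1 w2) n - F w1 (Y2 v (-k-1) w2) n)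
     = bar_mult (delta_ser (invm (cm z)) x1m (negm x0m) (cm z))
         (\<lambda>(a,b). if b = 0 then F (Y1 v (-a-1) w1) w2 else (\<lambda>_. 0)) (-1, k))"

definition P_intw :: "'v::cvs \<Rightarrow> complex \<Rightarrow> ('v \<Rightarrow> int \<Rightarrow> 'a::cvs \<Rightarrow> 'a) \<Rightarrow> ('v \<Rightarrow> int \<Rightarrow> 'b::cvs \<Rightarrow> 'b)
    \<Rightarrow> ('v \<Rightarrow> int \<Rightarrow> 'c::cvs \<Rightarrow> 'c) \<Rightarrow> ('a \<Rightarrow> 'b \<Rightarrow> complex \<Rightarrow> 'c) \<Rightarrow> bool" where
  "P_intw om z Y1 Y2 Y3 F \<longleftrightarrow> quasi_intw om z Y1 Y2 Y3 F \<and>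
    (\<forall>v w1 w2 t n.
       bar_mult (delta_ser (invm x0m) x1m (negm (cm z)) x0m)
         (\<lambda>(a,b). if a = 0 then bar_mode Y3 om v (-b-1) (F w1 w2) else (\<lambda>_. 0)) t n
     = bar_mult (delta_ser (invm (cm z)) x1m (negm x0m) (cm z))
         (\<lambda>(a,b). if b = 0 then F (Y1 v (-a-1) w1) w2 else (\<lambda>_. 0)) t n
     + bar_mult (delta_ser (invm x0m) (cm z) (negm x1m) (negm x0m))
         (\<lambda>(a,b). if a = 0 then F w1 (Y2 v (-b-1) w2) else (\<lambda>_. 0)) t n)"

definition Fdual :: "('v \<Rightarrow> int \<Rightarrow> 'c::cvs \<Rightarrow> 'c) \<Rightarrow> 'v \<Rightarrow> ('a \<Rightarrow> 'b \<Rightarrow> complex \<Rightarrow> 'c) \<Rightarrow> ('a \<Rightarrow> 'b \<Rightarrow> complex) set" where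
  "Fdual Y3 om F = {(\<lambda>w1 w2. pair \<alpha> (F w1 w2)) | \<alpha>. \<alpha> \<in> gdual Y3 om}"

text \<open>\<open>e\<^sup>x\<^sup>L\<^sup>(\<^sup>1\<^sup>)(-x\<^sup>-\<^sup>2)\<^sup>L\<^sup>(\<^sup>0\<^sup>) v\<close> as a V-valued series in x: coefficient of \<open>x\<^sup>b\<close>.\<close>
definition opp_ser :: "('v::cvs \<Rightarrow> int \<Rightarrow> 'v \<Rightarrow> 'v) \<Rightarrow> 'v \<Rightarrow> 'v \<Rightarrow> int \<Rightarrow> 'v" where
  "opp_ser Y om v b = fsum (\<lambda>(j::nat, k::int).
     if int j - 2 * k = b
     then ((-1) powi k / of_nat (fact j)) *\<^sub>C ((Y om 2) ^^ j) (dproj (Vgr Y om) k v)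
     else 0)"

text \<open>\<open>\<tau>\<^sub>P\<^sub>(\<^sub>z\<^sub>)(x\<^sub>0\<^sup>-\<^sup>1\<delta>((x\<^sub>1\<^sup>-\<^sup>1-z)/x\<^sub>0) Y\<^sub>t(v,x\<^sub>1))\<lambda>\<close>, a series in \<open>x\<^sub>0,x\<^sub>1\<close> of functionals on
  \<open>W\<^sub>1 \<otimes> W\<^sub>2\<close> (encoded as bilinear forms), evaluated at \<open>w\<^sub>1 \<otimes> w\<^sub>2\<close>.\<close>
definition tau_delta :: "('v::cvs \<Rightarrow> int \<Rightarrow> 'v \<Rightarrow> 'v) \<Rightarrow> 'v \<Rightarrow> complex \<Rightarrow> ('v \<Rightarrow> int \<Rightarrow> 'a::cvs \<Rightarrow> 'a)
    \<Rightarrow> ('v \<Rightarrow> int \<Rightarrow> 'b::cvs \<Rightarrow> 'b) \<Rightarrow> 'v \<Rightarrow> ('a \<Rightarrow> 'b \<Rightarrow> complex) \<Rightarrow> int \<times> int \<Rightarrow> 'a \<Rightarrow> 'b \<Rightarrow> complex" where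
  "tau_delta Y om z Y1 Y2 v lam t w1 w2 =
     ser_mult (delta_ser (invm (cm z)) x1invm (negm x0m) (cm z))
       (\<lambda>(a,b). lam (Y1 (opp_ser Y om v b) (-a-1) w1) w2) t
   + ser_mult (delta_ser (invm x0m) (cm z) (negm x1invm) (negm x0m))
       (\<lambda>(a,b). if a = 0 then fsum (\<lambda>c. lam w1 (Y2 (opp_ser Y om v c) (b - c - 1) w2)) else 0) t"

text \<open>\<open>\<tau>\<^sub>P\<^sub>(\<^sub>z\<^sub>)(Y\<^sub>t(v,x\<^sub>1))\<lambda>\<close> = residue in \<open>x\<^sub>0\<close>; coefficient of \<open>x\<^sub>1\<^sup>b\<close>.
  \<open>\<tau>\<^sub>P\<^sub>(\<^sub>z\<^sub>)(v \<otimes> t\<^sup>n)\<lambda>\<close> is the coefficient of \<open>x\<^sub>1\<^sup>-\<^sup>n\<^sup>-\<^sup>1\<close>.\<close>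
definition tau_Y :: "('v::cvs \<Rightarrow> int \<Rightarrow> 'v \<Rightarrow> 'v) \<Rightarrow> 'v \<Rightarrow> complex \<Rightarrow> ('v \<Rightarrow> int \<Rightarrow> 'a::cvs \<Rightarrow> 'a)
    \<Rightarrow> ('v \<Rightarrow> int \<Rightarrow> 'b::cvs \<Rightarrow> 'b) \<Rightarrow> 'v \<Rightarrow> ('a \<Rightarrow> 'b \<Rightarrow> complex) \<Rightarrow> int \<Rightarrow> 'a \<Rightarrow> 'b \<Rightarrow> complex" where
  "tau_Y Y om z Y1 Y2 v lam b = tau_delta Y om z Y1 Y2 v lam (-1, b)"

definition tau_mode :: "('v::cvs \<Rightarrow> int \<Rightarrow> 'v \<Rightarrow> 'v) \<Rightarrow> 'v \<Rightarrow> complex \<Rightarrow> ('v \<Rightarrow> int \<Rightarrow> 'a::cvs \<Rightarrow> 'a)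
    \<Rightarrow> ('v \<Rightarrow> int \<Rightarrow> 'b::cvs \<Rightarrow> 'b) \<Rightarrow> 'v \<Rightarrow> int \<Rightarrow> ('a \<Rightarrow> 'b \<Rightarrow> complex) \<Rightarrow> 'a \<Rightarrow> 'b \<Rightarrow> complex" where
  "tau_mode Y om z Y1 Y2 v n lam = tau_Y Y om z Y1 Y2 v lam (-n-1)"

definition P_compatible :: "('v::cvs \<Rightarrow> int \<Rightarrow> 'v \<Rightarrow> 'v) \<Rightarrow> 'v \<Rightarrow> complex \<Rightarrow> ('v \<Rightarrow> int \<Rightarrow> 'a::cvs \<Rightarrow> 'a)
    \<Rightarrow> ('v \<Rightarrow> int \<Rightarrow> 'b::cvs \<Rightarrow> 'b) \<Rightarrow> ('a \<Rightarrow> 'b \<Rightarrow> complex) \<Rightarrow> bool" where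
  "P_compatible Y om z Y1 Y2 lam \<longleftrightarrow> (\<forall>v.
     (\<exists>N. \<forall>n\<ge>N. tau_mode Y om z Y1 Y2 v n lam = (\<lambda>_ _. 0))
   \<and> (\<forall>t w1 w2. tau_delta Y om z Y1 Y2 v lam t w1 w2
        = ser_mult (delta_ser (invm x0m) x1invm (negm (cm z)) x0m)
            (\<lambda>(a,b). if a = 0 then tau_Y Y om z Y1 Y2 v lam b w1 w2 else 0) t))"

definition P_compatible_set :: "('v::cvs \<Rightarrow> int \<Rightarrow> 'v \<Rightarrow> 'v) \<Rightarrow> 'v \<Rightarrow> complex \<Rightarrow> ('v \<Rightarrow> int \<Rightarrow> 'a::cvs \<Rightarrow> 'a)
    \<Rightarrow> ('v \<Rightarrow> int \<Rightarrow> 'b::cvs \<Rightarrow> 'b) \<Rightarrow> ('a \<Rightarrow> 'b \<Rightarrow> complex) set \<Rightarrow> bool" where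
  "P_compatible_set Y om z Y1 Y2 S \<longleftrightarrow> (\<forall>lam\<in>S. P_compatible Y om z Y1 Y2 lam)"

end

theory Submission
  imports Defs
begin


global_interpretation cv: vector_space "scaleC :: complex \<Rightarrow> 'a \<Rightarrow> 'a::cvs"
  by unfold_locales (simp_all add: scaleC_add_right scaleC_add_left scaleC_scaleC scaleC_one)

lemma cspan_eq: "cspan S = cv.span S"
  unfolding cspan_def cv.span_explicit by blast

lemma clinear_iff_linear: "clinear f \<longleftrightarrow> Vector_Spaces.linear scaleC scaleC f"
  unfolding clinear_def Vector_Spaces.linear_iff
  by (simp add: cv.vector_space_axioms)

lemma clinear_add: "clinear f \<Longrightarrow> f (x + y) = f x + f y"
  unfolding clinear_def by blast
lemma clinear_scale: "clinear f \<Longrightarrow> f (c *\<^sub>C x) = c *\<^sub>C f x"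
  unfolding clinear_def by blast
lemma clinear_zero: "clinear f \<Longrightarrow> f 0 = 0"
proof -
  assume "clinear f"
  then have "f (0 + 0) = f 0 + f 0" by (rule clinear_add)
  then show ?thesis by simp
qed
lemma clinear_minus: "clinear f \<Longrightarrow> f (- x) = - f x"
proof -
  assume a: "clinear f"
  then have "f (x + - x) = f x + f (- x)" by (rule clinear_add)
  then have "f x + f (- x) = 0" using clinear_zero[OF a] by simp
  then show ?thesis by (simp add: eq_neg_iff_add_eq_0 add.commute)
qed
lemma clinear_diff: "clinear f \<Longrightarrow> f (x - y) = f x - f y"
  using clinear_add[of f x "- y"] clinear_minus[of f y] by (simp only: diff_conv_add_uminus)
lemma clinear_sum: "clinear f \<Longrightarrow> f (sum g A) = (\<Sum>x\<in>A. f (g x))"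
  by (induction A rule: infinite_finite_induct) (auto simp: clinear_zero clinear_add)
lemma clinear_comp: "clinear f \<Longrightarrow> clinear g \<Longrightarrow> clinear (\<lambda>x. f (g x))"
  unfolding clinear_def by auto
lemma clinear_id: "clinear (\<lambda>x. x)" unfolding clinear_def by auto
lemma clinear_0: "clinear (\<lambda>x. 0)" unfolding clinear_def by auto
lemma clinear_sub: "clinear f \<Longrightarrow> clinear g \<Longrightarrow> clinear (\<lambda>x. f x - g x)"
  unfolding clinear_def by (auto simp: algebra_simps scaleC_add_right cv.scale_right_diff_distrib)
lemma clinear_addf: "clinear f \<Longrightarrow> clinear g \<Longrightarrow> clinear (\<lambda>x. f x + g x)"
  unfolding clinear_def by (auto simp: algebra_simps scaleC_add_right)
lemma clinear_scalef: "clinear f \<Longrightarrow> clinear (\<lambda>x. c *\<^sub>C f x)"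
  unfolding clinear_def by (auto simp: scaleC_add_right scaleC_scaleC mult.commute)
lemma clinear_funpow: "clinear (f :: 'a::cvs \<Rightarrow> 'a) \<Longrightarrow> clinear (f ^^ k)"
proof (induction k)
  case 0 then show ?case unfolding clinear_def by (simp add: funpow_0)
next
  case (Suc k) then show ?case using clinear_comp[of f "f ^^ k"] by (simp add: comp_def)
qed

lemma scaleC_zero_left[simp]: "0 *\<^sub>C x = (0::'a::cvs)" by (rule cv.scale_zero_left)
lemma scaleC_zero_right[simp]: "c *\<^sub>C (0::'a::cvs) = 0" by (rule cv.scale_zero_right)
lemma scaleC_one'[simp]: "1 *\<^sub>C x = (x::'a::cvs)" by (rule scaleC_one)
lemma scaleC_sum_right: "c *\<^sub>C (\<Sum>i\<in>A. f i) = (\<Sum>i\<in>A. c *\<^sub>C (f i::'a::cvs))"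
  by (rule cv.scale_sum_right)
lemma scaleC_sum_left: "(\<Sum>i\<in>A. f i) *\<^sub>C x = (\<Sum>i\<in>A. f i *\<^sub>C (x::'a::cvs))"
  by (rule cv.scale_sum_left)
lemma scaleC_diff_right: "c *\<^sub>C (x - y) = c *\<^sub>C x - c *\<^sub>C (y::'a::cvs)"
  by (rule cv.scale_right_diff_distrib)
lemma scaleC_minus_right: "c *\<^sub>C (- x) = - (c *\<^sub>C (x::'a::cvs))"
  by (rule cv.scale_minus_right)
lemma scaleC_minus_left: "(- c) *\<^sub>C x = - (c *\<^sub>C (x::'a::cvs))"
  by (rule cv.scale_minus_left)
lemma scaleC_eq_0_iff: "c *\<^sub>C x = (0::'a::cvs) \<longleftrightarrow> c = 0 \<or> x = 0"
  by (rule cv.scale_eq_0_iff)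
lemma scaleC_complex[simp]: "c *\<^sub>C (x::complex) = c * x"
  by (simp add: scaleC_complex_def)

lemma fsum_eq_sum:
  assumes "finite A" "\<And>x. x \<notin> A \<Longrightarrow> f x = 0"
  shows "fsum f = sum f A"
proof -
  have sub: "{i. f i \<noteq> 0} \<subseteq> A" using assms(2) by blast
  hence fin: "finite {i. f i \<noteq> 0}" using assms(1) finite_subset by blast
  have "sum f A = sum f {i. f i \<noteq> 0}"
    by (rule sum.mono_neutral_right[OF assms(1) sub]) auto
  thus ?thesis unfolding fsum_def using fin by simp
qed

lemma fsum_infinite: "infinite {i. f i \<noteq> 0} \<Longrightarrow> fsum f = 0"
  unfolding fsum_def by simp

lemma fsum_zero[simp]: "fsum (\<lambda>_. 0) = 0"
  by (subst fsum_eq_sum[of "{}"]) auto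

lemma fsum_zero': "(\<And>x. f x = 0) \<Longrightarrow> fsum f = 0"
  using fsum_zero by (metis ext)

lemma fsum_single:
  assumes "\<And>y. y \<noteq> x \<Longrightarrow> f y = 0"
  shows "fsum f = f x"
  using fsum_eq_sum[of "{x}" f] assms by auto

definition fsupp :: "('i \<Rightarrow> 'a::zero) \<Rightarrow> bool" where
  "fsupp f \<longleftrightarrow> finite {i. f i \<noteq> 0}"

lemma fsuppI: "finite A \<Longrightarrow> (\<And>x. x \<notin> A \<Longrightarrow> f x = 0) \<Longrightarrow> fsupp f"
  unfolding fsupp_def by (metis (mono_tags, lifting) finite_subset mem_Collect_eq subsetI)

lemma fsuppE: "fsupp f \<Longrightarrow> (\<And>A. finite A \<Longrightarrow> (\<And>x. x \<notin> A \<Longrightarrow> f x = 0) \<Longrightarrow> P) \<Longrightarrow> P"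
  unfolding fsupp_def by blast

lemma fsum_fsupp: "fsupp f \<Longrightarrow> fsum f = sum f {i. f i \<noteq> 0}"
  unfolding fsupp_def fsum_def by simp

lemma fsum_add:
  assumes "fsupp f" "fsupp g"
  shows "fsum (\<lambda>x. f x + g x) = fsum f + fsum (g :: _ \<Rightarrow> 'a::comm_monoid_add)"
proof -
  obtain A where A: "finite A" "\<And>x. x \<notin> A \<Longrightarrow> f x = 0" using assms(1) by (rule fsuppE) blast
  obtain B where B: "finite B" "\<And>x. x \<notin> B \<Longrightarrow> g x = 0" using assms(2) by (rule fsuppE) blast
  have "fsum (\<lambda>x. f x + g x) = sum (\<lambda>x. f x + g x) (A \<union> B)"
    by (rule fsum_eq_sum) (use A B in auto)
  also have "\<dots> = sum f (A \<union> B) + sum g (A \<union> B)" by (simp add: sum.distrib)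
  also have "sum f (A \<union> B) = fsum f" by (rule fsum_eq_sum[symmetric]) (use A B in auto)
  also have "sum g (A \<union> B) = fsum g" by (rule fsum_eq_sum[symmetric]) (use A B in auto)
  finally show ?thesis .
qed

lemma fsupp_add: "fsupp f \<Longrightarrow> fsupp g \<Longrightarrow> fsupp (\<lambda>x. f x + (g x :: 'a::comm_monoid_add))"
  unfolding fsupp_def by (rule finite_subset[of _ "{i. f i \<noteq> 0} \<union> {i. g i \<noteq> 0}"]) auto

lemma fsupp_minus: "fsupp f \<Longrightarrow> fsupp (\<lambda>x. - (f x :: 'a::ab_group_add))"
  unfolding fsupp_def by simp

lemma fsupp_diff: "fsupp f \<Longrightarrow> fsupp g \<Longrightarrow> fsupp (\<lambda>x. f x - (g x :: 'a::ab_group_add))"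
  unfolding fsupp_def by (rule finite_subset[of _ "{i. f i \<noteq> 0} \<union> {i. g i \<noteq> 0}"]) auto

lemma fsum_minus: "fsum (\<lambda>x. - f x) = - fsum (f :: _ \<Rightarrow> 'a::ab_group_add)"
  unfolding fsum_def by (simp add: sum_negf)

lemma fsum_diff:
  assumes "fsupp f" "fsupp g"
  shows "fsum (\<lambda>x. f x - g x) = fsum f - fsum (g :: _ \<Rightarrow> 'a::ab_group_add)"
  using fsum_add[OF assms(1) fsupp_minus[OF assms(2)]] by (simp add: fsum_minus)

lemma fsupp_0[simp]: "fsupp (\<lambda>x. 0)" unfolding fsupp_def by simp

lemma fsupp_sum: "finite I \<Longrightarrow> (\<And>i. i \<in> I \<Longrightarrow> fsupp (f i)) \<Longrightarrow> fsupp (\<lambda>x. \<Sum>i\<in>I. (f i x :: 'a::comm_monoid_add))"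
proof (induction I rule: finite_induct)
  case empty then show ?case by simp
next
  case (insert a I)
  then have "fsupp (\<lambda>x. f a x + (\<Sum>i\<in>I. f i x))" by (intro fsupp_add) auto
  then show ?case using insert(1,2) by simp
qed

lemma fsum_sum:
  assumes "finite I" "\<And>i. i \<in> I \<Longrightarrow> fsupp (f i)"
  shows "fsum (\<lambda>x. \<Sum>i\<in>I. f i x) = (\<Sum>i\<in>I. fsum (f i :: _ \<Rightarrow> 'a::comm_monoid_add))"
  using assms
proof (induction I rule: finite_induct)
  case empty then show ?case by simp
next
  case (insert a I)
  have "fsupp (\<lambda>x. \<Sum>i\<in>I. f i x)" using insert by (intro fsupp_sum) auto
  then have "fsum (\<lambda>x. f a x + (\<Sum>i\<in>I. f i x)) = fsum (f a) + fsum (\<lambda>x. \<Sum>i\<in>I. f i x)"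
    using insert by (intro fsum_add) auto
  then show ?case using insert by simp
qed

lemma fsum_scaleC: "fsum (\<lambda>x. c *\<^sub>C f x) = c *\<^sub>C fsum (f :: _ \<Rightarrow> 'a::cvs)"
proof (cases "c = 0")
  case True then show ?thesis by simp
next
  case False
  then have "{x. c *\<^sub>C f x \<noteq> 0} = {x. f x \<noteq> 0}" by (auto simp: scaleC_eq_0_iff)
  then show ?thesis unfolding fsum_def using False by (simp add: scaleC_sum_right)
qed

lemma fsum_scaleC_left: "fsum (\<lambda>x. f x *\<^sub>C v) = fsum f *\<^sub>C (v :: 'a::cvs)"
proof (cases "v = 0")
  case True then show ?thesis by simp
next
  case False
  then have "{x. f x *\<^sub>C v \<noteq> 0} = {x. f x \<noteq> 0}" by (auto simp: scaleC_eq_0_iff)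
  then show ?thesis unfolding fsum_def using False by (simp add: scaleC_sum_left)
qed

lemma fsum_clinear:
  assumes "clinear \<phi>" "fsupp f"
  shows "\<phi> (fsum f) = fsum (\<lambda>x. \<phi> (f x))"
proof -
  obtain A where A: "finite A" "\<And>x. x \<notin> A \<Longrightarrow> f x = 0" using assms(2) by (rule fsuppE) blast
  show ?thesis
    using A assms(1) by (simp add: fsum_eq_sum[OF A] fsum_eq_sum[of A] clinear_sum clinear_zero)
qed

lemma fsupp_clinear: "clinear \<phi> \<Longrightarrow> fsupp f \<Longrightarrow> fsupp (\<lambda>x. \<phi> (f x))"
  by (elim fsuppE, rule fsuppI) (auto simp: clinear_zero)

lemma fsum_reindex_bij:
  assumes "bij h"
  shows "fsum (\<lambda>x. f (h x)) = fsum f"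
proof -
  have eq: "{x. f (h x) \<noteq> 0} = inv h ` {y. f y \<noteq> 0}"
    using assms by (auto simp: bij_inv_eq_iff image_iff) (metis assms bij_inv_eq_iff)
  have inj: "inj_on (inv h) {y. f y \<noteq> 0}"
    using assms by (meson bij_imp_bij_inv bij_is_inj inj_on_subset subset_UNIV)
  have fin: "finite {x. f (h x) \<noteq> 0} \<longleftrightarrow> finite {y. f y \<noteq> 0}"
    unfolding eq using finite_image_iff[OF inj] by simp
  have "sum (\<lambda>x. f (h x)) (inv h ` {y. f y \<noteq> 0}) = sum (\<lambda>y. f (h (inv h y))) {y. f y \<noteq> 0}"
    by (rule sum.reindex[OF inj, unfolded comp_def])
  also have "\<dots> = sum f {y. f y \<noteq> 0}" using assms by (simp add: surj_f_inv_f[OF bij_is_surj])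
  finally show ?thesis unfolding fsum_def fin eq[symmetric] by simp
qed

lemma fsum_pair:
  assumes "fsupp (\<lambda>p. f (fst p) (snd p))"
  shows "fsum (\<lambda>p. f (fst p) (snd p)) = fsum (\<lambda>x. fsum (\<lambda>y. f x y :: 'a::comm_monoid_add))"
proof -
  obtain A where A: "finite A" "\<And>p. p \<notin> A \<Longrightarrow> f (fst p) (snd p) = 0" using assms by (rule fsuppE) blast
  let ?X = "fst ` A" and ?Y = "snd ` A"
  have A': "f x y = 0" if "x \<notin> ?X \<or> y \<notin> ?Y" for x y
  proof -
    have "(x, y) \<notin> A" using that by force
    then show ?thesis using A(2) by fastforce
  qed
  have "fsum (\<lambda>p. f (fst p) (snd p)) = sum (\<lambda>p. f (fst p) (snd p)) (?X \<times> ?Y)"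
    by (rule fsum_eq_sum) (use A A' in \<open>auto simp: finite_cartesian_product\<close>, (metis A(2) fst_conv image_eqI), (metis A(2) snd_conv image_eqI))
  also have "\<dots> = (\<Sum>x\<in>?X. \<Sum>y\<in>?Y. f x y)" by (simp add: sum.cartesian_product case_prod_beta)
  also have "\<dots> = (\<Sum>x\<in>?X. fsum (\<lambda>y. f x y))"
    by (rule sum.cong[OF refl], rule fsum_eq_sum[symmetric]) (use A A' in auto)
  also have "\<dots> = fsum (\<lambda>x. fsum (\<lambda>y. f x y))"
    by (rule fsum_eq_sum[symmetric]) (use A A' in \<open>auto intro!: fsum_zero'\<close>)
  finally show ?thesis .
qed

lemma fsum_swap:
  assumes "finite A" "finite B" "\<And>x y. x \<notin> A \<or> y \<notin> B \<Longrightarrow> f x y = 0"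
  shows "fsum (\<lambda>x. fsum (\<lambda>y. f x y)) = fsum (\<lambda>y. fsum (\<lambda>x. f x y :: 'a::comm_monoid_add))"
proof -
  have "fsum (\<lambda>x. fsum (\<lambda>y. f x y)) = (\<Sum>x\<in>A. \<Sum>y\<in>B. f x y)"
    by (subst fsum_eq_sum[OF assms(1)]) (auto intro!: fsum_zero' sum.cong fsum_eq_sum assms)
  also have "\<dots> = (\<Sum>y\<in>B. \<Sum>x\<in>A. f x y)" by (rule sum.swap)
  also have "\<dots> = fsum (\<lambda>y. fsum (\<lambda>x. f x y))"
    by (subst fsum_eq_sum[OF assms(2)]) (auto intro!: fsum_zero' sum.cong fsum_eq_sum[symmetric] assms)
  finally show ?thesis .
qed

lemma fsum_cong: "(\<And>x. f x = g x) \<Longrightarrow> fsum f = fsum g" by (metis ext)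



locale dfam =
  fixes E :: "'i \<Rightarrow> 'a::cvs set"
  assumes sub: "\<And>i. cv.subspace (E i)"
    and indep: "\<And>z J. finite J \<Longrightarrow> (\<And>j. z j \<in> E j) \<Longrightarrow> sum z J = 0 \<Longrightarrow> \<forall>j\<in>J. z j = 0"
begin

lemma zero_in[simp]: "0 \<in> E i" using sub cv.subspace_0 by blast
lemma add_in: "x \<in> E i \<Longrightarrow> y \<in> E i \<Longrightarrow> x + y \<in> E i" using sub cv.subspace_add by blast
lemma scale_in: "x \<in> E i \<Longrightarrow> c *\<^sub>C x \<in> E i" using sub cv.subspace_scale by blast
lemma diff_in: "x \<in> E i \<Longrightarrow> y \<in> E i \<Longrightarrow> x - y \<in> E i" using sub cv.subspace_diff by blast
lemma minus_in: "x \<in> E i \<Longrightarrow> - x \<in> E i" using sub cv.subspace_neg by blast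
lemma sum_in: "(\<And>x. x \<in> A \<Longrightarrow> f x \<in> E i) \<Longrightarrow> sum f A \<in> E i" using sub cv.subspace_sum by blast

lemma fsum_in: "(\<And>x. f x \<in> E i) \<Longrightarrow> fsum f \<in> E i"
  unfolding fsum_def by (auto intro: sum_in)

definition decomp :: "'a \<Rightarrow> 'i set \<Rightarrow> bool" where
  "decomp w I \<longleftrightarrow> (\<exists>z J. finite J \<and> J \<subseteq> I \<and> (\<forall>j. z j \<in> E j) \<and> (\<forall>j. j \<notin> J \<longrightarrow> z j = 0) \<and> w = sum z J)"

lemma decomp_span:
  assumes "x \<in> cv.span (\<Union>j\<in>I. E j)"
  shows "decomp x I"
  using assms
proof (induction rule: cv.span_induct_alt)
  case base
  show ?case unfolding decomp_def by (rule exI[of _ "\<lambda>_. 0"], rule exI[of _ "{}"]) auto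
next
  case (step c x y)
  from step(1) obtain j0 where j0: "j0 \<in> I" "x \<in> E j0" by blast
  from step(2) obtain z J where zJ: "finite J" "J \<subseteq> I" "\<forall>j. z j \<in> E j" "\<forall>j. j \<notin> J \<longrightarrow> z j = 0" "y = sum z J"
    unfolding decomp_def by blast
  define z' where "z' = z(j0 := c *\<^sub>C x + z j0)"
  have "sum z' (insert j0 J) = c *\<^sub>C x + sum z (insert j0 J)"
  proof -
    have "sum z' (insert j0 J) = z' j0 + sum z' (J - {j0})"
      using zJ(1) by (simp add: sum.insert_remove)
    also have "sum z' (J - {j0}) = sum z (J - {j0})" unfolding z'_def by (rule sum.cong) auto
    also have "z' j0 = c *\<^sub>C x + z j0" unfolding z'_def by simp
    finally show ?thesis using zJ(1) by (simp add: sum.insert_remove add.assoc)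
  qed
  also have "sum z (insert j0 J) = sum z J"
    using zJ(1,4) by (cases "j0 \<in> J") (auto simp: insert_absorb)
  finally have eq: "c *\<^sub>C x + y = sum z' (insert j0 J)" using zJ(5) by simp
  show ?case unfolding decomp_def
    apply (rule exI[of _ z'], rule exI[of _ "insert j0 J"])
    using zJ j0 eq by (auto simp: z'_def intro!: add_in scale_in)
qed

lemma decomp_unique:
  assumes "finite J" "\<And>j. z j \<in> E j" "\<And>j. j \<notin> J \<Longrightarrow> z j = 0"
    and "finite J'" "\<And>j. z' j \<in> E j" "\<And>j. j \<notin> J' \<Longrightarrow> z' j = 0"
    and "sum z J = sum z' J'"
  shows "z k = z' k"
proof -
  let ?K = "J \<union> J'"
  have "sum z ?K = sum z J" by (rule sum.mono_neutral_right) (use assms in auto)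
  moreover have "sum z' ?K = sum z' J'" by (rule sum.mono_neutral_right) (use assms in auto)
  ultimately have "sum (\<lambda>j. z j - z' j) ?K = 0" using assms(7) by (simp add: sum_subtractf)
  then have "\<forall>j\<in>?K. z j - z' j = 0" using indep[of ?K "\<lambda>j. z j - z' j"] assms by (auto intro: diff_in)
  then show ?thesis using assms(3,6) by (cases "k \<in> ?K") auto
qed

lemma dproj_eq:
  assumes "finite J" "\<And>j. z j \<in> E j" "\<And>j. j \<notin> J \<Longrightarrow> z j = 0"
  shows "dproj E k (sum z J) = z k"
  unfolding dproj_def
proof (rule the_equality)
  have "sum z J - z k = sum (z(k := 0)) J"
  proof (cases "k \<in> J")
    case True
    then have "sum z J = z k + sum z (J - {k})" using assms(1) by (simp add: sum.remove)
    moreover have "sum (z(k := 0)) J = sum z (J - {k})"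
      using True assms(1) by (simp add: sum.remove)
    ultimately show ?thesis by simp
  next
    case False
    then show ?thesis using assms(3) by (auto intro!: sum.cong)
  qed
  also have "\<dots> \<in> cspan (\<Union>j\<in>-{k}. E j)" unfolding cspan_eq
    by (rule cv.span_sum) (use assms(2) in \<open>auto intro: cv.span_base simp: cv.span_zero\<close>)
  finally show "z k \<in> E k \<and> sum z J - z k \<in> cspan (\<Union>j\<in>-{k}. E j)" using assms(2) by simp
next
  fix u assume u: "u \<in> E k \<and> sum z J - u \<in> cspan (\<Union>j\<in>-{k}. E j)"
  then obtain y J' where y: "finite J'" "J' \<subseteq> -{k}" "\<forall>j. y j \<in> E j" "\<forall>j. j \<notin> J' \<longrightarrow> y j = 0"
    "sum z J - u = sum y J'"
    using decomp_span[of "sum z J - u" "-{k}"] unfolding cspan_eq decomp_def by blast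
  define y' where "y' = y(k := u)"
  have kJ: "k \<notin> J'" using y(2) by blast
  have "sum y' (insert k J') = y' k + sum y' J'" using y(1) kJ by simp
  also have "sum y' J' = sum y J'" unfolding y'_def using kJ by (intro sum.cong) auto
  finally have "sum y' (insert k J') = u + sum y J'" by (simp add: y'_def)
  then have "sum z J = sum y' (insert k J')" using y(5) by (simp add: algebra_simps)
  moreover have "\<And>j. y' j \<in> E j" unfolding y'_def using y(3) u by simp
  moreover have "\<And>j. j \<notin> insert k J' \<Longrightarrow> y' j = 0" unfolding y'_def using y(4) by simp
  ultimately have "z k = y' k"
    using decomp_unique[of J z "insert k J'" y' k] assms y(1) by blast
  then show "u = z k" by (simp add: y'_def)
qed

lemma dproj_mem:
  assumes "x \<in> E j"
  shows "dproj E k x = (if k = j then x else 0)"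
proof -
  have "dproj E k (sum (\<lambda>i. if i = j then x else 0) {j}) = (if k = j then x else 0)"
    by (rule dproj_eq) (use assms in auto)
  then show ?thesis by simp
qed

end

locale dsum = dfam +
  assumes total: "\<And>w. w \<in> cspan (\<Union>n. E n)"
begin

lemma decomp_all: "\<exists>z J. finite J \<and> (\<forall>j. z j \<in> E j) \<and> (\<forall>j. j \<notin> J \<longrightarrow> z j = 0) \<and> w = sum z J"
  using decomp_span[of w UNIV] total[of w] unfolding cspan_eq decomp_def by blast

lemma dproj_in: "dproj E k w \<in> E k"
  using decomp_all[of w] dproj_eq by auto

lemma dproj_add: "dproj E k (x + y) = dproj E k x + dproj E k y"
proof -
  obtain z J where z: "finite J" "\<forall>j. z j \<in> E j" "\<forall>j. j \<notin> J \<longrightarrow> z j = 0" "x = sum z J"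
    using decomp_all by blast
  obtain z' J' where z': "finite J'" "\<forall>j. z' j \<in> E j" "\<forall>j. j \<notin> J' \<longrightarrow> z' j = 0" "y = sum z' J'"
    using decomp_all by blast
  have x: "x = sum z (J \<union> J')" unfolding z(4) by (rule sum.mono_neutral_left) (use z z' in auto)
  have y: "y = sum z' (J \<union> J')" unfolding z'(4) by (rule sum.mono_neutral_left) (use z z' in auto)
  have "x + y = sum (\<lambda>j. z j + z' j) (J \<union> J')" by (simp add: x y sum.distrib)
  then have "dproj E k (x + y) = z k + z' k"
    by (simp only:) (rule dproj_eq, use z z' in \<open>auto intro: add_in\<close>)
  moreover have "dproj E k x = z k" unfolding x by (rule dproj_eq) (use z z' in auto)
  moreover have "dproj E k y = z' k" unfolding y by (rule dproj_eq) (use z z' in auto)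
  ultimately show ?thesis by simp
qed

lemma dproj_scale: "dproj E k (c *\<^sub>C x) = c *\<^sub>C dproj E k x"
proof -
  obtain z J where z: "finite J" "\<forall>j. z j \<in> E j" "\<forall>j. j \<notin> J \<longrightarrow> z j = 0" "x = sum z J"
    using decomp_all by blast
  have "c *\<^sub>C x = sum (\<lambda>j. c *\<^sub>C z j) J" by (simp add: z(4) scaleC_sum_right)
  then have "dproj E k (c *\<^sub>C x) = c *\<^sub>C z k"
    by (simp only:) (rule dproj_eq, use z in \<open>auto intro: scale_in\<close>)
  moreover have "dproj E k x = z k" unfolding z(4) by (rule dproj_eq) (use z in auto)
  ultimately show ?thesis by simp
qed

lemma dproj_clinear: "clinear (dproj E k)"
  unfolding clinear_def using dproj_add dproj_scale by blast

end

lemma gen_eig_mono: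
  fixes S :: "'a::cvs \<Rightarrow> 'a"
  assumes "clinear S" "(S ^^ k) w = 0" "k \<le> l"
  shows "(S ^^ l) w = 0"
proof -
  have l: "l = (l - k) + k" using assms(3) by simp
  have "(S ^^ l) w = (S ^^ ((l - k) + k)) w" using l by simp
  also have "\<dots> = (S ^^ (l - k)) ((S ^^ k) w)" by (simp only: funpow_add comp_apply)
  finally have "(S ^^ l) w = (S ^^ (l - k)) ((S ^^ k) w)" .
  then show ?thesis using assms(2) clinear_zero[OF clinear_funpow[OF assms(1)]] by simp
qed

lemma clinear_shift: "clinear T \<Longrightarrow> clinear (\<lambda>x. T x - n *\<^sub>C x)"
  by (rule clinear_sub, assumption, rule clinear_scalef[OF clinear_id])

lemma gen_eig_subspace:
  assumes T: "clinear T"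
  shows "cv.subspace (gen_eig T n)"
proof -
  let ?S = "\<lambda>x. T x - n *\<^sub>C x"
  have S: "clinear ?S" using clinear_shift[OF T] .
  have SK: "clinear (?S ^^ k)" for k using clinear_funpow[OF S] .
  show ?thesis unfolding cv.subspace_def gen_eig_def
  proof (intro conjI ballI allI)
    show "0 \<in> {w. \<exists>k. (?S ^^ k) w = 0}" by (auto intro: exI[of _ 0])
  next
    fix x y assume "x \<in> {w. \<exists>k. (?S ^^ k) w = 0}" "y \<in> {w. \<exists>k. (?S ^^ k) w = 0}"
    then obtain k l where k: "(?S ^^ k) x = 0" and l: "(?S ^^ l) y = 0" by blast
    have "(?S ^^ max k l) x = 0" by (rule gen_eig_mono[OF S k]) simp
    moreover have "(?S ^^ max k l) y = 0" by (rule gen_eig_mono[OF S l]) simp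
    ultimately have "(?S ^^ max k l) (x + y) = 0" by (simp add: clinear_add[OF SK])
    then show "x + y \<in> {w. \<exists>k. (?S ^^ k) w = 0}" by blast
  next
    fix c x assume "x \<in> {w. \<exists>k. (?S ^^ k) w = 0}"
    then obtain k where k: "(?S ^^ k) x = 0" by blast
    then have "(?S ^^ k) (c *\<^sub>C x) = 0" by (simp add: clinear_scale[OF SK])
    then show "c *\<^sub>C x \<in> {w. \<exists>k. (?S ^^ k) w = 0}" by blast
  qed
qed

lemma funpow_commute:
  assumes "\<And>x. f (g x) = g (f x)"
  shows "(f ^^ k) (g x) = g ((f ^^ k) x)"
  by (induction k) (auto simp: assms)

lemma gen_eig_invariant:
  assumes T: "clinear T" and x: "x \<in> gen_eig T n"
  shows "T x - m *\<^sub>C x \<in> gen_eig T n"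
proof -
  let ?S = "\<lambda>x. T x - n *\<^sub>C x" and ?R = "\<lambda>x. T x - m *\<^sub>C x"
  have R: "clinear ?R" using clinear_shift[OF T] .
  have comm: "?S (?R y) = ?R (?S y)" for y
  proof -
    have 1: "?S (?R y) = T (T y) - m *\<^sub>C T y - (n *\<^sub>C T y - (n * m) *\<^sub>C y)"
      by (simp only: clinear_diff[OF T] clinear_scale[OF T] scaleC_diff_right scaleC_scaleC)
    have 2: "?R (?S y) = T (T y) - n *\<^sub>C T y - (m *\<^sub>C T y - (m * n) *\<^sub>C y)"
      by (simp only: clinear_diff[OF T] clinear_scale[OF T] scaleC_diff_right scaleC_scaleC)
    show ?thesis unfolding 1 2 by (simp add: mult.commute diff_diff_eq diff_diff_eq2 add.commute add.left_commute)
  qed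
  obtain k where k: "(?S ^^ k) x = 0" using x unfolding gen_eig_def by blast
  have "(?S ^^ k) (?R x) = ?R ((?S ^^ k) x)" by (rule funpow_commute) (rule comm)
  also have "\<dots> = 0" using k clinear_zero[OF R] by simp
  finally show ?thesis unfolding gen_eig_def by blast
qed

lemma gen_eig_invariant_pow:
  assumes T: "clinear T" and x: "x \<in> gen_eig T n"
  shows "((\<lambda>x. T x - m *\<^sub>C x) ^^ k) x \<in> gen_eig T n"
proof (induction k)
  case 0 then show ?case using x by simp
next
  case (Suc k)
  then show ?case using gen_eig_invariant[OF T Suc] by simp
qed

lemma gen_eig_inj:
  assumes T: "clinear T" and x: "x \<in> gen_eig T n" and ne: "n \<noteq> m"
    and z: "T x - m *\<^sub>C x = 0"
  shows "x = 0"
proof -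
  let ?S = "\<lambda>x. T x - n *\<^sub>C x"
  have Tx: "T x = m *\<^sub>C x" using z by simp
  have Sx: "?S x = (m - n) *\<^sub>C x" by (simp only: Tx cv.scale_left_diff_distrib)
  have pow: "(?S ^^ k) x = (m - n) ^ k *\<^sub>C x" for k
  proof (induction k)
    case 0 then show ?case by simp
  next
    case (Suc k)
    have "(?S ^^ Suc k) x = ?S ((m - n) ^ k *\<^sub>C x)" using Suc by simp
    also have "\<dots> = (m - n) ^ k *\<^sub>C ?S x"
      by (simp only: clinear_scale[OF clinear_shift[OF T]])
    also have "\<dots> = (m - n) ^ Suc k *\<^sub>C x"
      by (simp only: Sx scaleC_scaleC power_Suc mult.commute)
    finally show ?case .
  qed
  obtain k where "(?S ^^ k) x = 0" using x unfolding gen_eig_def by blast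
  then have "(m - n) ^ k *\<^sub>C x = 0" using pow by simp
  then show ?thesis using ne by (simp add: scaleC_eq_0_iff)
qed

lemma gen_eig_inj_pow:
  assumes T: "clinear T" and x: "x \<in> gen_eig T n" and ne: "n \<noteq> m"
    and z: "((\<lambda>x. T x - m *\<^sub>C x) ^^ k) x = 0"
  shows "x = 0"
  using x z
proof (induction k arbitrary: x)
  case 0 then show ?case by simp
next
  case (Suc k)
  have "((\<lambda>x. T x - m *\<^sub>C x) ^^ Suc k) x = ((\<lambda>x. T x - m *\<^sub>C x) ^^ k) (T x - m *\<^sub>C x)"
    by (simp only: funpow_Suc_right comp_apply)
  then have "((\<lambda>x. T x - m *\<^sub>C x) ^^ k) (T x - m *\<^sub>C x) = 0" using Suc(3) by simp
  then have "T x - m *\<^sub>C x = 0" using Suc(1) gen_eig_invariant[OF T Suc(2)] by blast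
  then show ?case using gen_eig_inj[OF T Suc(2) ne] by blast
qed

lemma gen_eig_zero: "clinear T \<Longrightarrow> 0 \<in> gen_eig T n"
  using gen_eig_subspace cv.subspace_0 by blast

lemma gen_eig_indep:
  assumes T: "clinear T" and "finite J" and "\<And>j. z j \<in> gen_eig T j" and "sum z J = 0"
  shows "\<forall>j\<in>J. z j = 0"
  using assms(2-4)
proof (induction J arbitrary: z rule: finite_induct)
  case empty then show ?case by simp
next
  case (insert m J)
  let ?R = "\<lambda>x. T x - m *\<^sub>C x"
  obtain k where k: "(?R ^^ k) (z m) = 0" using insert(4)[of m] unfolding gen_eig_def by blast
  have RK: "clinear (?R ^^ k)" using clinear_funpow[OF clinear_shift[OF T]] .
  have "(?R ^^ k) (sum z (insert m J)) = 0" using insert(5) clinear_zero[OF RK] by simp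
  moreover have "(?R ^^ k) (sum z (insert m J)) = (?R ^^ k) (z m) + sum (\<lambda>j. (?R ^^ k) (z j)) J"
    using insert(1,2) by (subst clinear_sum[OF RK]) (simp add: sum.insert)
  ultimately have s0: "sum (\<lambda>j. (?R ^^ k) (z j)) J = 0" using k by simp
  define z' where "z' = (\<lambda>j. if j = m then 0 else (?R ^^ k) (z j))"
  have "sum z' J = sum (\<lambda>j. (?R ^^ k) (z j)) J"
    unfolding z'_def using insert(2) by (intro sum.cong) auto
  then have "sum z' J = 0" using s0 by simp
  moreover have "z' j \<in> gen_eig T j" for j
    unfolding z'_def using gen_eig_zero[OF T] gen_eig_invariant_pow[OF T insert(4)] by simp
  ultimately have z'0: "\<forall>j\<in>J. z' j = 0" using insert(3) by blast
  have zJ: "\<forall>j\<in>J. z j = 0"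
  proof
    fix j assume j: "j \<in> J"
    then have "j \<noteq> m" using insert(2) by blast
    then have "(?R ^^ k) (z j) = 0" using bspec[OF z'0 j] unfolding z'_def by (simp split: if_splits)
    then show "z j = 0" using gen_eig_inj_pow[OF T insert(4) \<open>j \<noteq> m\<close>] by blast
  qed
  then have "sum z J = 0" by simp
  then have "z m = 0" using insert(1,2,5) by simp
  then show ?case using zJ by simp
qed

lemma dfam_gen_eig:
  assumes T: "clinear T" and E: "\<And>i. E i \<subseteq> gen_eig T (\<phi> i)" "\<And>i. cv.subspace (E i)" and inj: "inj \<phi>"
  shows "dfam E"
proof
  show "cv.subspace (E i)" for i by (rule E(2))
next
  fix z J assume J: "finite J" and z: "\<And>j. z j \<in> E j" and s: "sum z J = 0"
  define z' where "z' = (\<lambda>n. if n \<in> \<phi> ` J then z (inv \<phi> n) else 0)"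
  have injJ: "inj_on \<phi> J" by (meson inj inj_on_subset subset_UNIV)
  have "sum z' (\<phi> ` J) = sum (z' \<circ> \<phi>) J" by (rule sum.reindex[OF injJ])
  also have "\<dots> = sum z J" unfolding z'_def comp_def by (intro sum.cong) (auto simp: inv_f_f[OF inj])
  finally have "sum z' (\<phi> ` J) = 0" using s by simp
  moreover have "z' n \<in> gen_eig T n" for n
  proof (cases "n \<in> \<phi> ` J")
    case True
    then obtain j where j: "n = \<phi> j" by blast
    then have "z' n = z j" unfolding z'_def using True by (simp add: inv_f_f[OF inj])
    then show ?thesis using z[of j] E(1)[of j] j by auto
  next
    case False
    then show ?thesis unfolding z'_def using gen_eig_zero[OF T] by simp
  qed
  ultimately have "\<forall>n\<in>\<phi> ` J. z' n = 0" using gen_eig_indep[OF T] J by blast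
  then show "\<forall>j\<in>J. z j = 0" unfolding z'_def by (auto simp: inv_f_f[OF inj])
qed



lemma gchoose_one: "((of_int 1 :: complex) gchoose i) = (if i = 0 \<or> i = 1 then 1 else 0)"
proof -
  have "((of_int 1 :: complex) gchoose i) = of_nat (1 choose i)"
    using binomial_gbinomial[of 1 i, where 'a=complex] by simp
  then show ?thesis by (cases i) (auto simp: binomial_eq_0)
qed

lemma gchoose_one': "((1 :: complex) gchoose i) = (if i = 0 \<or> i = 1 then 1 else 0)"
  using gchoose_one by simp

lemma gchoose_zero: "((of_int 0 :: complex) gchoose i) = (if i = 0 then 1 else 0)"
  by (simp add: gbinomial_0_left)

lemma gchoose_m2: "(-1) ^ i * ((of_int (-2) :: complex) gchoose i) = of_nat i + 1"
proof -
  have "((of_int (-2) :: complex) gchoose i) = (-1) ^ i * ((of_nat i + 1) gchoose i)"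
    by (subst gbinomial_negated_upper) simp
  also have "((of_nat i + 1 :: complex) gchoose i) = of_nat (Suc i choose i)"
    using binomial_gbinomial[of "Suc i" i, where 'a=complex] by (simp add: add.commute)
  also have "Suc i choose i = Suc i" by simp
  finally have "((of_int (-2) :: complex) gchoose i) = (-1) ^ i * (of_nat i + 1)" by simp
  then show ?thesis by (simp add: power_mult_distrib[symmetric] mult.assoc[symmetric])
qed

locale voa =
  fixes Y :: "'v::cvs \<Rightarrow> int \<Rightarrow> 'v \<Rightarrow> 'v" and vac om :: 'v and c :: complex
  assumes VOA: "VOA Y vac om c"
begin

lemmas VOA_bil = VOA[unfolded VOA_def, THEN conjunct1]
lemmas VOA_trunc = VOA[unfolded VOA_def, THEN conjunct2, THEN conjunct1]
lemmas VOA_vac = VOA[unfolded VOA_def, THEN conjunct2, THEN conjunct2, THEN conjunct1]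
lemmas VOA_vacann = VOA[unfolded VOA_def, THEN conjunct2, THEN conjunct2, THEN conjunct2, THEN conjunct1]
lemmas VOA_create = VOA[unfolded VOA_def, THEN conjunct2, THEN conjunct2, THEN conjunct2, THEN conjunct2, THEN conjunct1]
lemmas VOA_bor = VOA[unfolded VOA_def, THEN conjunct2, THEN conjunct2, THEN conjunct2, THEN conjunct2, THEN conjunct2, THEN conjunct1]
lemmas VOA_vir = VOA[unfolded VOA_def, THEN conjunct2, THEN conjunct2, THEN conjunct2, THEN conjunct2, THEN conjunct2, THEN conjunct2, THEN conjunct1]
lemmas VOA_lm1 = VOA[unfolded VOA_def, THEN conjunct2, THEN conjunct2, THEN conjunct2, THEN conjunct2, THEN conjunct2, THEN conjunct2, THEN conjunct2, THEN conjunct1]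
lemmas VOA_span = VOA[unfolded VOA_def, THEN conjunct2, THEN conjunct2, THEN conjunct2, THEN conjunct2, THEN conjunct2, THEN conjunct2, THEN conjunct2, THEN conjunct2, THEN conjunct1]
lemmas VOA_fd = VOA[unfolded VOA_def, THEN conjunct2, THEN conjunct2, THEN conjunct2, THEN conjunct2, THEN conjunct2, THEN conjunct2, THEN conjunct2, THEN conjunct2, THEN conjunct2, THEN conjunct1]
lemmas VOA_low = VOA[unfolded VOA_def, THEN conjunct2, THEN conjunct2, THEN conjunct2, THEN conjunct2, THEN conjunct2, THEN conjunct2, THEN conjunct2, THEN conjunct2, THEN conjunct2, THEN conjunct2, THEN conjunct1]
lemmas VOA_vac0 = VOA[unfolded VOA_def, THEN conjunct2, THEN conjunct2, THEN conjunct2, THEN conjunct2, THEN conjunct2, THEN conjunct2, THEN conjunct2, THEN conjunct2, THEN conjunct2, THEN conjunct2, THEN conjunct2, THEN conjunct1]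
lemmas VOA_om2 = VOA[unfolded VOA_def, THEN conjunct2, THEN conjunct2, THEN conjunct2, THEN conjunct2, THEN conjunct2, THEN conjunct2, THEN conjunct2, THEN conjunct2, THEN conjunct2, THEN conjunct2, THEN conjunct2, THEN conjunct2]

lemma Ybil: "clinear (Y v m)" "clinear (\<lambda>v. Y v m w)"
  using VOA_bil unfolding bilinear_op_def by blast+

lemma Ytrunc: "\<exists>N. \<forall>m\<ge>N. Y u m v = 0"
  using VOA_trunc by blast

lemma Yvac: "Y vac m v = (if m = -1 then v else 0)"
  using VOA_vac by blast

lemma Ycreate: "Y v (-1) vac = v"
  using VOA_create by blast

lemma Yvir: "Y om (m + 1) (Y om (n + 1) v) - Y om (n + 1) (Y om (m + 1) v)
        = of_int (m - n) *\<^sub>C Y om (m + n + 1) v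
          + (if m + n = 0 then (of_int (m ^ 3 - m) / 12 * c) *\<^sub>C v else 0)"
  using VOA_vir by blast

lemma YLm1: "Y (Y om 0 u) m w = (- of_int m) *\<^sub>C Y u (m - 1) w"
  using VOA_lm1 by blast

lemma Vspan: "v \<in> cspan (\<Union>n. Vgr Y om n)"
  using VOA_span by blast

lemma Vlow: "\<exists>K. \<forall>n<K. Vgr Y om n = {0}"
  using VOA_low .

lemma Lm1_vac: "Y om 0 u = Y u (-2) vac"
proof -
  have "Y (Y om 0 u) (-1) vac = (- of_int (-1)) *\<^sub>C Y u (-1 - 1) vac" by (rule YLm1)
  then show ?thesis by (simp add: Ycreate)
qed

lemma L0_clinear: "clinear (Y om 1)" by (rule Ybil)

lemma Vgr_sub: "Vgr Y om n \<subseteq> gen_eig (Y om 1) (of_int n)"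
  unfolding Vgr_def gen_eig_def by (auto intro: exI[of _ 1])

lemma Vgr_subspace: "cv.subspace (Vgr Y om n)"
  unfolding cv.subspace_def Vgr_def
proof (intro conjI ballI allI)
  show "0 \<in> {v. Y om 1 v = of_int n *\<^sub>C v}" by (simp add: clinear_zero[OF L0_clinear])
next
  fix x y assume "x \<in> {v. Y om 1 v = of_int n *\<^sub>C v}" "y \<in> {v. Y om 1 v = of_int n *\<^sub>C v}"
  then show "x + y \<in> {v. Y om 1 v = of_int n *\<^sub>C v}"
    by (simp add: clinear_add[OF L0_clinear] scaleC_add_right)
next
  fix a x assume "x \<in> {v. Y om 1 v = of_int n *\<^sub>C v}"
  then show "a *\<^sub>C x \<in> {v. Y om 1 v = of_int n *\<^sub>C v}"
    by (simp add: clinear_scale[OF L0_clinear] scaleC_scaleC mult.commute)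
qed

sublocale V: dsum "Vgr Y om"
proof -
  interpret dfam "Vgr Y om"
    by (rule dfam_gen_eig[OF L0_clinear Vgr_sub Vgr_subspace]) (simp add: inj_on_def)
  show "dsum (Vgr Y om)" by unfold_locales (rule Vspan)
qed

lemma L1_lower: assumes "v \<in> Vgr Y om h" shows "Y om 2 v \<in> Vgr Y om (h - 1)"
proof -
  have "Y om (0 + 1) (Y om (1 + 1) v) - Y om (1 + 1) (Y om (0 + 1) v)
        = of_int (0 - 1) *\<^sub>C Y om (0 + 1 + 1) v + (if (0::int) + 1 = 0 then (of_int (0 ^ 3 - 0) / 12 * c) *\<^sub>C v else 0)"
    by (rule Yvir)
  then have "Y om 1 (Y om 2 v) - Y om 2 (Y om 1 v) = - Y om 2 v" by (simp add: scaleC_minus_left)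
  moreover have "Y om 1 v = of_int h *\<^sub>C v" using assms unfolding Vgr_def by simp
  ultimately have "Y om 1 (Y om 2 v) - of_int h *\<^sub>C Y om 2 v = - Y om 2 v"
    by (simp only: clinear_scale[OF Ybil(1)])
  then have "Y om 1 (Y om 2 v) = of_int h *\<^sub>C Y om 2 v - Y om 2 v"
    by (metis diff_add_cancel diff_conv_add_uminus add.commute)
  also have "\<dots> = of_int (h - 1) *\<^sub>C Y om 2 v"
    by (simp add: cv.scale_left_diff_distrib)
  finally show ?thesis unfolding Vgr_def by simp
qed

lemma L1_pow_lower: assumes "v \<in> Vgr Y om h" shows "(Y om 2 ^^ j) v \<in> Vgr Y om (h - int j)"
proof (induction j)
  case 0 then show ?case using assms by simp
next
  case (Suc j)
  then show ?case using L1_lower[OF Suc] by (simp add: algebra_simps)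
qed

end

locale vmod = voa Y vac om c for Y :: "'v::cvs \<Rightarrow> int \<Rightarrow> 'v \<Rightarrow> 'v" and vac om c +
  fixes YW :: "'v \<Rightarrow> int \<Rightarrow> 'w::cvs \<Rightarrow> 'w"
  assumes GM: "gen_module Y vac om YW"
begin

lemmas GM_bil = GM[unfolded gen_module_def, THEN conjunct1]
lemmas GM_trunc = GM[unfolded gen_module_def, THEN conjunct2, THEN conjunct1]
lemmas GM_vac = GM[unfolded gen_module_def, THEN conjunct2, THEN conjunct2, THEN conjunct1]
lemmas GM_bor = GM[unfolded gen_module_def, THEN conjunct2, THEN conjunct2, THEN conjunct2, THEN conjunct1]
lemmas GM_span = GM[unfolded gen_module_def, THEN conjunct2, THEN conjunct2, THEN conjunct2, THEN conjunct2, THEN conjunct1]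
lemmas GM_fd = GM[unfolded gen_module_def, THEN conjunct2, THEN conjunct2, THEN conjunct2, THEN conjunct2, THEN conjunct2, THEN conjunct1]
lemmas GM_low = GM[unfolded gen_module_def, THEN conjunct2, THEN conjunct2, THEN conjunct2, THEN conjunct2, THEN conjunct2, THEN conjunct2]

lemma Wbil: "clinear (YW v m)" "clinear (\<lambda>v. YW v m w)"
  using GM_bil unfolding bilinear_op_def by blast+

lemma Wtrunc: "\<exists>N. \<forall>m\<ge>N. YW v m w = 0"
  using GM_trunc by blast

lemma Wvac: "YW vac m w = (if m = -1 then w else 0)"
  using GM_vac by blast

lemma Wbor: "borcherds Y YW"
  using GM_bor .

lemma Wspan: "w \<in> cspan (\<Union>n. Wgr YW om n)"
  using GM_span by blast

lemma Wlow: "\<exists>K. \<forall>k::int. k < K \<longrightarrow> Wgr YW om (n + of_int k) = {0}"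
  using GM_low by blast

lemma WL0_clinear: "clinear (YW om 1)" by (rule Wbil)

sublocale W: dsum "Wgr YW om"
proof -
  interpret dfam "Wgr YW om"
    by (rule dfam_gen_eig[OF WL0_clinear, of _ id]) (auto simp: Wgr_def gen_eig_subspace[OF WL0_clinear])
  show "dsum (Wgr YW om)" by unfold_locales (rule Wspan)
qed

lemma Wscale1: "YW (a *\<^sub>C u) m w = a *\<^sub>C YW u m w"
  using clinear_scale[OF Wbil(2)] .
lemma Wadd1: "YW (u + v) m w = YW u m w + YW v m w"
  using clinear_add[OF Wbil(2)] .
lemma Wzero1: "YW 0 m w = 0"
  using clinear_zero[OF Wbil(2)] .
lemma Wsum1: "YW (sum f A) m w = (\<Sum>a\<in>A. YW (f a) m w)"
  using clinear_sum[OF Wbil(2)] .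
lemma Wzero2: "YW u m 0 = 0"
  using clinear_zero[OF Wbil(1)] .

end



context vmod begin

lemma bor_inst: "fsum (\<lambda>i::nat. ((of_int m :: complex) gchoose i) *\<^sub>C YW (Y u (l + int i) v) (m + n - int i) w)
   = fsum (\<lambda>i::nat. ((-1) ^ i * ((of_int l :: complex) gchoose i)) *\<^sub>C
        (YW u (l + m - int i) (YW v (n + int i) w)
         - ((-1) powi l) *\<^sub>C YW v (l + n - int i) (YW u (m + int i) w)))"
  using Wbor unfolding borcherds_def by blast

lemma WLm1: "YW (Y om 0 u) n w = (- of_int n) *\<^sub>C YW u (n - 1) w"
proof -
  have B: "fsum (\<lambda>i::nat. ((of_int 0 :: complex) gchoose i) *\<^sub>C YW (Y u (-2 + int i) vac) (0 + n - int i) w)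
   = fsum (\<lambda>i::nat. ((-1) ^ i * ((of_int (-2) :: complex) gchoose i)) *\<^sub>C
        (YW u (-2 + 0 - int i) (YW vac (n + int i) w)
         - ((-1) powi (-2)) *\<^sub>C YW vac (-2 + n - int i) (YW u (0 + int i) w)))"
    by (rule bor_inst)
  have L: "fsum (\<lambda>i::nat. ((of_int 0 :: complex) gchoose i) *\<^sub>C YW (Y u (-2 + int i) vac) (0 + n - int i) w)
      = YW (Y u (-2) vac) n w"
    by (subst fsum_single[where x=0]) (auto simp: gchoose_zero gbinomial_0_left)
  define g where "g = (\<lambda>i::nat. (of_nat i + 1 :: complex) *\<^sub>C
        ((if n + int i = -1 then YW u (-2 - int i) w else 0) - (if -2 + n - int i = -1 then YW u (int i) w else 0)))"
  have R: "fsum (\<lambda>i::nat. ((-1) ^ i * ((of_int (-2) :: complex) gchoose i)) *\<^sub>C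
        (YW u (-2 + 0 - int i) (YW vac (n + int i) w)
         - ((-1) powi (-2)) *\<^sub>C YW vac (-2 + n - int i) (YW u (0 + int i) w))) = fsum g"
  proof (rule fsum_cong)
    fix i :: nat
    have p: "((-1::complex) powi (-2)) = 1" by (simp add: power_int_def)
    show "((-1) ^ i * ((of_int (-2) :: complex) gchoose i)) *\<^sub>C
        (YW u (-2 + 0 - int i) (YW vac (n + int i) w)
         - ((-1) powi (-2)) *\<^sub>C YW vac (-2 + n - int i) (YW u (0 + int i) w)) = g i"
      unfolding g_def gchoose_m2 p by (simp add: Wvac Wzero2)
  qed
  have G: "fsum g = (- of_int n) *\<^sub>C YW u (n - 1) w"
  proof (cases "n \<le> -1")
    case True
    have "fsum g = g (nat (-1 - n))"
      by (rule fsum_single) (use True in \<open>auto simp: g_def\<close>)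
    also have "\<dots> = (- of_int n) *\<^sub>C YW u (n - 1) w"
      using True unfolding g_def by (simp add: of_nat_nat algebra_simps)
    finally show ?thesis .
  next
    case False
    show ?thesis
    proof (cases "n = 0")
      case True
      then show ?thesis by (simp add: g_def fsum_zero')
    next
      case n0: False
      then have n1: "n \<ge> 1" using False by simp
      have "fsum g = g (nat (n - 1))"
        by (rule fsum_single) (use n1 in \<open>auto simp: g_def\<close>)
      also have "\<dots> = (- of_int n) *\<^sub>C YW u (n - 1) w"
        using n1 unfolding g_def by (simp add: of_nat_nat algebra_simps scaleC_minus_left)
      finally show ?thesis .
    qed
  qed
  show ?thesis using B L R G by (simp add: Lm1_vac)
qed

lemma WL0_comm: "YW om 1 (YW u m w) - YW u m (YW om 1 w) = YW (Y om 0 u) (m + 1) w + YW (Y om 1 u) m w"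
proof -
  have B: "fsum (\<lambda>i::nat. ((of_int 1 :: complex) gchoose i) *\<^sub>C YW (Y om (0 + int i) u) (1 + m - int i) w)
   = fsum (\<lambda>i::nat. ((-1) ^ i * ((of_int 0 :: complex) gchoose i)) *\<^sub>C
        (YW om (0 + 1 - int i) (YW u (m + int i) w)
         - ((-1) powi 0) *\<^sub>C YW u (0 + m - int i) (YW om (1 + int i) w)))"
    by (rule bor_inst)
  have L: "fsum (\<lambda>i::nat. ((of_int 1 :: complex) gchoose i) *\<^sub>C YW (Y om (0 + int i) u) (1 + m - int i) w)
     = YW (Y om 0 u) (m + 1) w + YW (Y om 1 u) m w"
  proof -
    have "fsum (\<lambda>i::nat. ((of_int 1 :: complex) gchoose i) *\<^sub>C YW (Y om (0 + int i) u) (1 + m - int i) w)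
       = (\<Sum>i\<in>{0,1}. ((of_int 1 :: complex) gchoose i) *\<^sub>C YW (Y om (0 + int i) u) (1 + m - int i) w)"
      by (rule fsum_eq_sum) (auto simp: gchoose_one gchoose_one')
    also have "\<dots> = YW (Y om 0 u) (m + 1) w + YW (Y om 1 u) m w"
      by (simp add: gchoose_one add.commute)
    finally show ?thesis .
  qed
  have R: "fsum (\<lambda>i::nat. ((-1) ^ i * ((of_int 0 :: complex) gchoose i)) *\<^sub>C
        (YW om (0 + 1 - int i) (YW u (m + int i) w)
         - ((-1) powi 0) *\<^sub>C YW u (0 + m - int i) (YW om (1 + int i) w)))
     = YW om 1 (YW u m w) - YW u m (YW om 1 w)"
    by (subst fsum_single[where x=0]) (auto simp: gchoose_zero gbinomial_0_left)
  show ?thesis using B L R by simp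
qed

lemma WL0_comm_hom:
  assumes "u \<in> Vgr Y om h"
  shows "YW om 1 (YW u m w) = YW u m (YW om 1 w) + of_int (h - m - 1) *\<^sub>C YW u m w"
proof -
  have h: "Y om 1 u = of_int h *\<^sub>C u" using assms unfolding Vgr_def by simp
  have "YW om 1 (YW u m w) - YW u m (YW om 1 w) = (- of_int (m + 1)) *\<^sub>C YW u (m + 1 - 1) w + of_int h *\<^sub>C YW u m w"
    using WL0_comm[of u m w] by (simp only: WLm1 h Wscale1)
  also have "\<dots> = of_int (h - m - 1) *\<^sub>C YW u m w"
    by (simp add: scaleC_add_left[symmetric] algebra_simps)
  finally show ?thesis by (simp add: algebra_simps)
qed

lemma weight_shift:
  assumes u: "u \<in> Vgr Y om h" and w: "w \<in> Wgr YW om p"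
  shows "YW u m w \<in> Wgr YW om (p + of_int (h - m - 1))"
proof -
  let ?q = "p + of_int (h - m - 1)"
  let ?Sp = "\<lambda>x. YW om 1 x - p *\<^sub>C x" and ?Sq = "\<lambda>x. YW om 1 x - ?q *\<^sub>C x"
  have step: "?Sq (YW u m x) = YW u m (?Sp x)" for x
  proof -
    have "?Sq (YW u m x) = YW u m (YW om 1 x) + of_int (h - m - 1) *\<^sub>C YW u m x - ?q *\<^sub>C YW u m x"
      using WL0_comm_hom[OF u] by simp
    also have "\<dots> = YW u m (YW om 1 x) - p *\<^sub>C YW u m x"
      by (simp add: scaleC_add_left algebra_simps)
    also have "\<dots> = YW u m (?Sp x)"
      by (simp add: clinear_diff[OF Wbil(1)] clinear_scale[OF Wbil(1)])
    finally show ?thesis .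
  qed
  have pow: "(?Sq ^^ k) (YW u m x) = YW u m ((?Sp ^^ k) x)" for k x
  proof (induction k)
    case 0 then show ?case by simp
  next
    case (Suc k)
    have "(?Sq ^^ Suc k) (YW u m x) = ?Sq ((?Sq ^^ k) (YW u m x))" by simp
    also have "\<dots> = ?Sq (YW u m ((?Sp ^^ k) x))" using Suc by simp
    also have "\<dots> = YW u m (?Sp ((?Sp ^^ k) x))" by (rule step)
    finally show ?case by simp
  qed
  obtain k where "(?Sp ^^ k) w = 0" using w unfolding Wgr_def gen_eig_def by blast
  then have "(?Sq ^^ k) (YW u m w) = 0" using pow Wzero2 by simp
  then show ?thesis unfolding Wgr_def gen_eig_def by blast
qed

end



lemma fsum_nonzero:
  assumes "fsum f \<noteq> 0" shows "\<exists>x. f x \<noteq> 0"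
proof (rule ccontr)
  assume "\<not> ?thesis"
  then have "\<And>x. f x = 0" by simp
  then have "fsum f = 0" by (rule fsum_zero')
  with assms show False by simp
qed

context voa begin

lemma Vfin: "\<exists>H. finite H \<and> (\<forall>h. h \<notin> H \<longrightarrow> dproj (Vgr Y om) h u = 0)"
proof -
  obtain z J where zJ: "finite J" "\<forall>j. z j \<in> Vgr Y om j" "\<forall>j. j \<notin> J \<longrightarrow> z j = 0" "u = sum z J"
    using V.decomp_all by blast
  have d: "dproj (Vgr Y om) h u = z h" for h unfolding zJ(4) by (rule V.dproj_eq) (use zJ(1-3) in auto)
  show ?thesis
  proof (intro exI conjI allI impI)
    show "finite J" by (rule zJ(1))
    fix h assume "h \<notin> J" then show "dproj (Vgr Y om) h u = 0" using d zJ(3) by simp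
  qed
qed

lemma Vdecomp:
  assumes "finite H" "\<forall>h. h \<notin> H \<longrightarrow> dproj (Vgr Y om) h u = 0"
  shows "u = (\<Sum>h\<in>H. dproj (Vgr Y om) h u)"
proof -
  obtain z J where zJ: "finite J" "\<forall>j. z j \<in> Vgr Y om j" "\<forall>j. j \<notin> J \<longrightarrow> z j = 0" "u = sum z J"
    using V.decomp_all by blast
  have d: "dproj (Vgr Y om) h u = z h" for h unfolding zJ(4) by (rule V.dproj_eq) (use zJ(1-3) in auto)
  have "sum z J = sum z (J \<union> H)" by (rule sum.mono_neutral_left) (use zJ(1,3) assms(1) in auto)
  also have "\<dots> = sum z H" by (rule sum.mono_neutral_right) (use zJ(1) assms d in auto)
  finally show ?thesis using zJ(4) d by simp
qed

lemma Vlow_pow: "\<exists>J. \<forall>j\<ge>J. (Y om 2 ^^ j) (dproj (Vgr Y om) h u) = 0"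
proof -
  obtain K where K: "\<forall>n<K. Vgr Y om n = {0}" using Vlow by blast
  have "(Y om 2 ^^ j) (dproj (Vgr Y om) h u) = 0" if "j \<ge> nat (h - K + 1)" for j
  proof -
    have "(Y om 2 ^^ j) (dproj (Vgr Y om) h u) \<in> Vgr Y om (h - int j)"
      by (rule L1_pow_lower) (rule V.dproj_in)
    moreover have "h - int j < K" using that by linarith
    ultimately show ?thesis using K by blast
  qed
  then show ?thesis by blast
qed

end

context vmod begin

lemma Wbar_low:
  "\<exists>M. \<forall>f\<in>Wbar YW om. \<forall>m\<le>M. f (k0 + of_int m) = 0"
proof -
  obtain K where K: "\<forall>k::int. k < K \<longrightarrow> Wgr YW om (k0 + of_int k) = {0}" using Wlow by blast
  have "f (k0 + of_int m) = 0" if "m \<le> K - 1" "f \<in> Wbar YW om" for m f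
  proof -
    have "f (k0 + of_int m) \<in> Wgr YW om (k0 + of_int m)" using that(2) unfolding Wbar_def by blast
    then show ?thesis using K that(1) by force
  qed
  then show ?thesis by blast
qed

lemma BM:
  assumes f: "f \<in> Wbar YW om" and H: "finite H" "\<forall>h. h \<notin> H \<longrightarrow> dproj (Vgr Y om) h u = 0"
  shows "bar_mode YW om u m f k = (\<Sum>h\<in>H. YW (dproj (Vgr Y om) h u) m (f (k - of_int (h - m - 1))))"
proof -
  let ?u = "\<lambda>h. dproj (Vgr Y om) h u"
  have step: "dproj (Wgr YW om) k (YW u m (f p)) =
      (\<Sum>h\<in>H. if p = k - of_int (h - m - 1) then YW (?u h) m (f p) else 0)" for p
  proof -
    have "YW u m (f p) = (\<Sum>h\<in>H. YW (?u h) m (f p))"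
      by (subst Vdecomp[OF H]) (simp add: Wsum1)
    then have "dproj (Wgr YW om) k (YW u m (f p)) = (\<Sum>h\<in>H. dproj (Wgr YW om) k (YW (?u h) m (f p)))"
      by (simp add: clinear_sum[OF W.dproj_clinear])
    also have "\<dots> = (\<Sum>h\<in>H. if p = k - of_int (h - m - 1) then YW (?u h) m (f p) else 0)"
    proof (rule sum.cong[OF refl])
      fix h
      have "YW (?u h) m (f p) \<in> Wgr YW om (p + of_int (h - m - 1))"
        by (rule weight_shift) (use f V.dproj_in in \<open>auto simp: Wbar_def\<close>)
      then have "dproj (Wgr YW om) k (YW (?u h) m (f p)) =
          (if k = p + of_int (h - m - 1) then YW (?u h) m (f p) else 0)"
        by (rule W.dproj_mem)
      then show "dproj (Wgr YW om) k (YW (?u h) m (f p)) =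
          (if p = k - of_int (h - m - 1) then YW (?u h) m (f p) else 0)"
        by (auto simp: algebra_simps)
    qed
    finally show ?thesis .
  qed
  have "bar_mode YW om u m f k = fsum (\<lambda>p. \<Sum>h\<in>H. if p = k - of_int (h - m - 1) then YW (?u h) m (f p) else 0)"
    unfolding bar_mode_def by (simp add: step)
  also have "\<dots> = (\<Sum>h\<in>H. fsum (\<lambda>p. if p = k - of_int (h - m - 1) then YW (?u h) m (f p) else 0))"
  proof (rule fsum_sum[OF H(1)])
    fix h show "fsupp (\<lambda>p. if p = k - of_int (h - m - 1) then YW (?u h) m (f p) else 0)"
      by (rule fsuppI[of "{k - of_int (h - m - 1)}"]) auto
  qed
  also have "\<dots> = (\<Sum>h\<in>H. YW (?u h) m (f (k - of_int (h - m - 1))))"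
    by (rule sum.cong[OF refl], subst fsum_single[where x="k - of_int (_ - m - 1)"]) auto
  finally show ?thesis .
qed

lemma bar_mode_Wbar: "bar_mode YW om u m f \<in> Wbar YW om"
  unfolding Wbar_def bar_mode_def by (auto intro!: W.fsum_in W.dproj_in)

lemma bar_mode_low:
  "\<exists>M. \<forall>f\<in>Wbar YW om. \<forall>m\<le>M. bar_mode YW om u m f k = 0"
proof -
  obtain H where H: "finite H" "\<forall>h. h \<notin> H \<longrightarrow> dproj (Vgr Y om) h u = 0" using Vfin by blast
  have "\<forall>h. \<exists>M. \<forall>f\<in>Wbar YW om. \<forall>m\<le>M. f ((k - of_int (h - 1)) + of_int m) = 0" using Wbar_low by blast
  then obtain M where M: "\<And>h f m. f \<in> Wbar YW om \<Longrightarrow> m \<le> M h \<Longrightarrow> f ((k - of_int (h - 1)) + of_int m) = 0"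
    by metis
  define M0 where "M0 = Min (insert 0 (M ` H))"
  have "bar_mode YW om u m f k = 0" if "m \<le> M0" "f \<in> Wbar YW om" for m f
  proof -
    have "YW (dproj (Vgr Y om) h u) m (f (k - of_int (h - m - 1))) = 0" if h: "h \<in> H" for h
    proof -
      have "M0 \<le> M h" unfolding M0_def using H(1) h by (intro Min_le) auto
      then have "f ((k - of_int (h - 1)) + of_int m) = 0" using M \<open>m \<le> M0\<close> \<open>f \<in> Wbar YW om\<close> by simp
      moreover have "k - of_int (h - m - 1) = (k - of_int (h - 1)) + of_int m" by simp
      ultimately show ?thesis by (metis Wzero2)
    qed
    then show ?thesis using BM[OF that(2) H] by simp
  qed
  then show ?thesis by blast
qed

lemma bar_mode_scale: "bar_mode YW om (a *\<^sub>C u) m f k = a *\<^sub>C bar_mode YW om u m f k"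
  unfolding bar_mode_def by (simp add: Wscale1 W.dproj_scale fsum_scaleC)

lemma bar_mode_add:
  assumes f: "f \<in> Wbar YW om"
  shows "bar_mode YW om (u + v) m f k = bar_mode YW om u m f k + bar_mode YW om v m f k"
proof -
  obtain H1 where H1: "finite H1" "\<forall>h. h \<notin> H1 \<longrightarrow> dproj (Vgr Y om) h u = 0" using Vfin by blast
  obtain H2 where H2: "finite H2" "\<forall>h. h \<notin> H2 \<longrightarrow> dproj (Vgr Y om) h v = 0" using Vfin by blast
  have a: "finite (H1 \<union> H2)" "\<forall>h. h \<notin> H1 \<union> H2 \<longrightarrow> dproj (Vgr Y om) h u = 0"
    "\<forall>h. h \<notin> H1 \<union> H2 \<longrightarrow> dproj (Vgr Y om) h v = 0"
    "\<forall>h. h \<notin> H1 \<union> H2 \<longrightarrow> dproj (Vgr Y om) h (u + v) = 0"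
    using H1 H2 by (auto simp: V.dproj_add)
  show ?thesis
    by (simp add: BM[OF f a(1,2)] BM[OF f a(1,3)] BM[OF f a(1,4)] V.dproj_add Wadd1 sum.distrib)
qed

lemma bar_mode_zero: "bar_mode YW om 0 m f k = 0"
  using bar_mode_scale[of 0 0 m f k] by simp

end



abbreviation "dA z \<equiv> delta_ser (invm x0m) x1m (negm (cm z)) x0m"
abbreviation "dB z \<equiv> delta_ser (invm (cm z)) x1m (negm x0m) (cm z)"
abbreviation "dC z \<equiv> delta_ser (invm x0m) (cm z) (negm x1m) (negm x0m)"
abbreviation "dA' z \<equiv> delta_ser (invm x0m) x1invm (negm (cm z)) x0m"
abbreviation "dB' z \<equiv> delta_ser (invm (cm z)) x1invm (negm x0m) (cm z)"
abbreviation "dC' z \<equiv> delta_ser (invm x0m) (cm z) (negm x1invm) (negm x0m)"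

lemmas mono_defs = x0m_def x1m_def x1invm_def cm_def negm_def invm_def

lemma delta_term_nz:
  assumes "delta_ser P A B D t \<noteq> 0"
  shows "\<exists>n i. fst (snd P) - n * fst (snd D) + (n - int i) * fst (snd A) + int i * fst (snd B) = fst t
      \<and> snd (snd P) - n * snd (snd D) + (n - int i) * snd (snd A) + int i * snd (snd B) = snd t"
proof -
  obtain x where "(case x of (n::int, i::nat) \<Rightarrow>
     if fst (snd P) - n * fst (snd D) + (n - int i) * fst (snd A) + int i * fst (snd B) = fst t
      \<and> snd (snd P) - n * snd (snd D) + (n - int i) * snd (snd A) + int i * snd (snd B) = snd t
     then fst P * (fst D) powi (-n) * ((of_int n :: complex) gchoose i) * (fst A) powi (n - int i) * (fst B) ^ i
     else 0) \<noteq> 0"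
    using fsum_nonzero[OF assms[unfolded delta_ser_def]] by blast
  then show ?thesis by (cases x) (auto split: if_splits)
qed

lemma dA_supp: "dA z s \<noteq> 0 \<Longrightarrow> fst s + snd s \<le> -1"
  by (drule delta_term_nz) (auto simp: mono_defs)

lemma dB_supp: "dB z s \<noteq> 0 \<Longrightarrow> fst s \<ge> 0"
  by (drule delta_term_nz) (auto simp: mono_defs)

lemma dC_supp: "dC z s \<noteq> 0 \<Longrightarrow> snd s \<ge> 0"
  by (drule delta_term_nz) (auto simp: mono_defs)

lemma dC_res: "dC z (-1, q) = (if q = 0 then 1 else 0)"
proof (cases "q = 0")
  case True
  show ?thesis unfolding delta_ser_def
    by (subst fsum_single[where x="(0::int, 0::nat)"]) (auto simp: mono_defs True split: if_splits)
next
  case False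
  show ?thesis unfolding delta_ser_def
    by (subst fsum_zero') (auto simp: mono_defs False gbinomial_0_left)
qed

lemma delta_flip:
  "delta_ser (a, (p0, - p1)) (b, (q0, - q1)) (c, (r0, - r1)) (d, (s0, - s1)) (t0, t1)
   = delta_ser (a, (p0, p1)) (b, (q0, q1)) (c, (r0, r1)) (d, (s0, s1)) (t0, - t1)"
  unfolding delta_ser_def
proof (rule fsum_cong)
  fix x :: "int \<times> nat"
  obtain n i where x: "x = (n, i)" by (cases x)
  have e: "(- p1 - n * - s1 + (n - int i) * - q1 + int i * - r1 = t1) \<longleftrightarrow>
           (p1 - n * s1 + (n - int i) * q1 + int i * r1 = - t1)" by (simp add: algebra_simps) linarith
  show "(case x of (n, i) \<Rightarrow>
          if fst (snd (a, p0, - p1)) - n * fst (snd (d, s0, - s1)) + (n - int i) * fst (snd (b, q0, - q1)) + int i * fst (snd (c, r0, - r1)) = fst (t0, t1) \<and>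
             snd (snd (a, p0, - p1)) - n * snd (snd (d, s0, - s1)) + (n - int i) * snd (snd (b, q0, - q1)) + int i * snd (snd (c, r0, - r1)) = snd (t0, t1)
          then fst (a, p0, - p1) * fst (d, s0, - s1) powi - n * (of_int n gchoose i) * fst (b, q0, - q1) powi (n - int i) * fst (c, r0, - r1) ^ i else 0) =
        (case x of (n, i) \<Rightarrow>
          if fst (snd (a, p0, p1)) - n * fst (snd (d, s0, s1)) + (n - int i) * fst (snd (b, q0, q1)) + int i * fst (snd (c, r0, r1)) = fst (t0, - t1) \<and>
             snd (snd (a, p0, p1)) - n * snd (snd (d, s0, s1)) + (n - int i) * snd (snd (b, q0, q1)) + int i * snd (snd (c, r0, r1)) = snd (t0, - t1)
          then fst (a, p0, p1) * fst (d, s0, s1) powi - n * (of_int n gchoose i) * fst (b, q0, q1) powi (n - int i) * fst (c, r0, r1) ^ i else 0)"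
    unfolding x using e by simp
qed

lemma dA'_flip: "dA' z (p, q) = dA z (p, - q)"
  using delta_flip[of 1 "-1" 0 1 0 1 "-z" 0 0 1 1 0 p q] by (simp add: mono_defs)

lemma dB'_flip: "dB' z (p, q) = dB z (p, - q)"
  using delta_flip[of "inverse z" 0 0 1 0 1 "-1" 1 0 z 0 0 p q] by (simp add: mono_defs)

lemma dC'_flip: "dC' z (p, q) = dC z (p, - q)"
  using delta_flip[of 1 "-1" 0 z 0 0 "-1" 0 1 "-1" 1 0 p q] by (simp add: mono_defs)



definition asupp :: "('v \<Rightarrow> int \<Rightarrow> 'w::cvs \<Rightarrow> 'w) \<Rightarrow> 'v \<Rightarrow> ('w \<Rightarrow> complex) \<Rightarrow> complex set" where
  "asupp YW om \<alpha> = {n. \<exists>w\<in>Wgr YW om n. \<alpha> w \<noteq> 0}"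

lemma exists_functional:
  assumes "(x::'w::cvs) \<noteq> 0"
  shows "\<exists>\<beta>. clinear \<beta> \<and> \<beta> x = (1::complex)"
proof -
  interpret p: vector_space_pair "scaleC :: complex \<Rightarrow> 'w \<Rightarrow> 'w" "scaleC :: complex \<Rightarrow> complex \<Rightarrow> complex"
    by unfold_locales
  have "cv.independent {x}" using assms by simp
  from p.linear_independent_extend[OF this, of "\<lambda>_. 1"]
  obtain g :: "'w \<Rightarrow> complex" where g: "Vector_Spaces.linear scaleC scaleC g" "g x = 1" by auto
  have "clinear g" using g(1) unfolding clinear_def Vector_Spaces.linear_iff by blast
  then show ?thesis using g(2) by blast
qed

context vmod begin

lemma gdual_D:
  assumes "\<alpha> \<in> gdual YW om"
  shows "clinear \<alpha>" "finite (asupp YW om \<alpha>)" "\<And>x n. x \<in> Wgr YW om n \<Longrightarrow> n \<notin> asupp YW om \<alpha> \<Longrightarrow> \<alpha> x = 0"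
  using assms unfolding gdual_def asupp_def by auto

lemma Wbar_D: "f \<in> Wbar YW om \<Longrightarrow> f n \<in> Wgr YW om n"
  unfolding Wbar_def by blast

lemma pair_eq:
  assumes a: "\<alpha> \<in> gdual YW om" and f: "f \<in> Wbar YW om"
  shows "pair \<alpha> f = (\<Sum>n\<in>asupp YW om \<alpha>. \<alpha> (f n))"
  unfolding pair_def
  by (rule fsum_eq_sum[OF gdual_D(2)[OF a]]) (rule gdual_D(3)[OF a Wbar_D[OF f]])

lemma Wbar_diff: "f \<in> Wbar YW om \<Longrightarrow> g \<in> Wbar YW om \<Longrightarrow> (\<lambda>n. f n - g n) \<in> Wbar YW om"
  unfolding Wbar_def by (auto intro: W.diff_in)
lemma Wbar_add: "f \<in> Wbar YW om \<Longrightarrow> g \<in> Wbar YW om \<Longrightarrow> (\<lambda>n. f n + g n) \<in> Wbar YW om"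
  unfolding Wbar_def by (auto intro: W.add_in)
lemma Wbar_scale: "f \<in> Wbar YW om \<Longrightarrow> (\<lambda>n. a *\<^sub>C f n) \<in> Wbar YW om"
  unfolding Wbar_def by (auto intro: W.scale_in)
lemma Wbar_zero: "(\<lambda>n. 0) \<in> Wbar YW om"
  unfolding Wbar_def by auto

lemma bar_mult_Wbar: "(\<And>s. g s \<in> Wbar YW om) \<Longrightarrow> bar_mult d g t \<in> Wbar YW om"
  unfolding Wbar_def bar_mult_def ser_mult_def by (auto intro!: W.fsum_in W.scale_in)

lemma pair_diff:
  assumes a: "\<alpha> \<in> gdual YW om" and f: "f \<in> Wbar YW om" and g: "g \<in> Wbar YW om"
  shows "pair \<alpha> (\<lambda>n. f n - g n) = pair \<alpha> f - pair \<alpha> g"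
  by (simp add: pair_eq[OF a] Wbar_diff[OF f g] f g clinear_diff[OF gdual_D(1)[OF a]] sum_subtractf)

lemma pair_add:
  assumes a: "\<alpha> \<in> gdual YW om" and f: "f \<in> Wbar YW om" and g: "g \<in> Wbar YW om"
  shows "pair \<alpha> (\<lambda>n. f n + g n) = pair \<alpha> f + pair \<alpha> g"
  by (simp add: pair_eq[OF a] Wbar_add[OF f g] f g clinear_add[OF gdual_D(1)[OF a]] sum.distrib)

lemma pair_scale:
  assumes a: "\<alpha> \<in> gdual YW om" and f: "f \<in> Wbar YW om"
  shows "pair \<alpha> (\<lambda>n. r *\<^sub>C f n) = r * pair \<alpha> f"
  by (simp add: pair_eq[OF a] Wbar_scale[OF f] f clinear_scale[OF gdual_D(1)[OF a]] sum_distrib_left)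

lemma pair_zero: "pair \<alpha> (\<lambda>n. 0) = 0" if "\<alpha> \<in> gdual YW om"
  using clinear_zero[OF gdual_D(1)[OF that]] unfolding pair_def by simp

lemma PB:
  assumes a: "\<alpha> \<in> gdual YW om" and g: "\<And>s. g s \<in> Wbar YW om"
    and sp: "\<And>k. fsupp (\<lambda>s. d s *\<^sub>C g (fst t - fst s, snd t - snd s) k)"
  shows "pair \<alpha> (bar_mult d g t) = ser_mult d (\<lambda>s. pair \<alpha> (g s)) t"
proof -
  let ?S = "asupp YW om \<alpha>"
  have S: "finite ?S" using gdual_D(2)[OF a] .
  have lin: "clinear \<alpha>" using gdual_D(1)[OF a] .
  have "pair \<alpha> (bar_mult d g t) = (\<Sum>k\<in>?S. \<alpha> (bar_mult d g t k))"
    by (rule pair_eq[OF a bar_mult_Wbar[OF g]])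
  also have "\<dots> = (\<Sum>k\<in>?S. fsum (\<lambda>s. d s * \<alpha> (g (fst t - fst s, snd t - snd s) k)))"
    unfolding bar_mult_def ser_mult_def
    by (rule sum.cong[OF refl], subst fsum_clinear[OF lin sp]) (simp add: clinear_scale[OF lin])
  also have "\<dots> = fsum (\<lambda>s. \<Sum>k\<in>?S. d s * \<alpha> (g (fst t - fst s, snd t - snd s) k))"
  proof (rule fsum_sum[symmetric, OF S])
    fix k show "fsupp (\<lambda>s. d s * \<alpha> (g (fst t - fst s, snd t - snd s) k))"
      using fsupp_clinear[OF lin sp[of k]] by (simp add: clinear_scale[OF lin])
  qed
  also have "\<dots> = fsum (\<lambda>s. d s *\<^sub>C pair \<alpha> (g (fst t - fst s, snd t - snd s)))"
    by (rule fsum_cong) (simp add: pair_eq[OF a g] sum_distrib_left)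
  finally show ?thesis unfolding ser_mult_def .
qed

lemma separate:
  assumes f: "f \<in> Wbar YW om" and p: "\<And>\<alpha>. \<alpha> \<in> gdual YW om \<Longrightarrow> pair \<alpha> f = 0"
  shows "f k = 0"
proof (rule ccontr)
  assume nz: "f k \<noteq> 0"
  obtain \<beta> :: "'w \<Rightarrow> complex" where b: "clinear \<beta>" "\<beta> (f k) = 1" using exists_functional[OF nz] by blast
  define \<alpha> where "\<alpha> = (\<lambda>w. \<beta> (dproj (Wgr YW om) k w))"
  have lin: "clinear \<alpha>" unfolding \<alpha>_def by (rule clinear_comp[OF b(1) W.dproj_clinear])
  have vanish: "\<alpha> w = 0" if "w \<in> Wgr YW om n" "n \<noteq> k" for w n
    unfolding \<alpha>_def using W.dproj_mem[OF that(1), of k] that(2) clinear_zero[OF b(1)] by simp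
  have "{n. \<exists>w\<in>Wgr YW om n. \<alpha> w \<noteq> 0} \<subseteq> {k}" using vanish by blast
  then have "finite {n. \<exists>w\<in>Wgr YW om n. \<alpha> w \<noteq> 0}" using finite_subset by blast
  then have a: "\<alpha> \<in> gdual YW om" unfolding gdual_def using lin by blast
  have "pair \<alpha> f = \<alpha> (f k)"
    unfolding pair_def by (rule fsum_single) (use vanish Wbar_D[OF f] in blast)
  also have "\<dots> = 1" unfolding \<alpha>_def using W.dproj_mem[OF Wbar_D[OF f], of k] b(2) by simp
  finally show False using p[OF a] by simp
qed

end



context voa begin

lemma L1_pow_zero: "(Y om 2 ^^ j) 0 = 0"
  using clinear_zero[OF clinear_funpow[OF Ybil(1)]] by simp

lemma opp_fin: "\<exists>C. finite C \<and> (\<forall>c. c \<notin> C \<longrightarrow> opp_ser Y om v c = 0)"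
proof -
  obtain H where H: "finite H" "\<forall>h. h \<notin> H \<longrightarrow> dproj (Vgr Y om) h v = 0" using Vfin by blast
  have "\<forall>h. \<exists>J. \<forall>j\<ge>J. (Y om 2 ^^ j) (dproj (Vgr Y om) h v) = 0" using Vlow_pow by blast
  then obtain J where J: "\<And>h j. j \<ge> J h \<Longrightarrow> (Y om 2 ^^ j) (dproj (Vgr Y om) h v) = 0" by metis
  define C where "C = (\<Union>h\<in>H. (\<lambda>j. int j - 2 * h) ` {..<J h})"
  have "finite C" unfolding C_def using H(1) by auto
  moreover have "opp_ser Y om v c = 0" if c: "c \<notin> C" for c
    unfolding opp_ser_def
  proof (rule fsum_zero')
    fix x :: "nat \<times> int"
    obtain j k where x: "x = (j, k)" by (cases x)
    have "(Y om 2 ^^ j) (dproj (Vgr Y om) k v) = 0" if "int j - 2 * k = c"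
    proof (cases "k \<in> H")
      case True
      then have "\<not> j < J k" using c that unfolding C_def by blast
      then show ?thesis using J by simp
    next
      case False
      then show ?thesis using H(2) L1_pow_zero by simp
    qed
    then show "(case x of (j, k) \<Rightarrow> if int j - 2 * k = c
        then ((-1) powi k / of_nat (fact j)) *\<^sub>C (Y om 2 ^^ j) (dproj (Vgr Y om) k v) else 0) = 0"
      unfolding x by simp
  qed
  ultimately show ?thesis by blast
qed

lemma opp_hom:
  assumes v: "v \<in> Vgr Y om h"
  shows "opp_ser Y om v b = (if b + 2 * h \<ge> 0
      then ((-1) powi h / of_nat (fact (nat (b + 2 * h)))) *\<^sub>C (Y om 2 ^^ nat (b + 2 * h)) v else 0)"
proof -
  have dp: "dproj (Vgr Y om) k v = (if k = h then v else 0)" for k by (rule V.dproj_mem[OF v])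
  show ?thesis
  proof (cases "b + 2 * h \<ge> 0")
    case True
    show ?thesis unfolding opp_ser_def
      by (subst fsum_single[where x="(nat (b + 2 * h), h)"]) (use True in \<open>auto simp: dp L1_pow_zero split: if_splits\<close>)
  next
    case False
    show ?thesis unfolding opp_ser_def
      by (subst fsum_zero') (use False in \<open>auto simp: dp L1_pow_zero split: if_splits\<close>)
  qed
qed

end

locale setting =
  M1: vmod Y vac om c Y1 + M2: vmod Y vac om c Y2 + M3: vmod Y vac om c Y3
  for Y :: "'v::cvs \<Rightarrow> int \<Rightarrow> 'v \<Rightarrow> 'v" and vac om c
  and Y1 :: "'v \<Rightarrow> int \<Rightarrow> 'a::cvs \<Rightarrow> 'a" and Y2 :: "'v \<Rightarrow> int \<Rightarrow> 'b::cvs \<Rightarrow> 'b"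
  and Y3 :: "'v \<Rightarrow> int \<Rightarrow> 'c::cvs \<Rightarrow> 'c" +
  fixes z :: complex and F :: "'a \<Rightarrow> 'b \<Rightarrow> complex \<Rightarrow> 'c"
  assumes quasi: "quasi_intw om z Y1 Y2 Y3 F"
begin

lemma Fbar: "F w1 w2 \<in> Wbar Y3 om"
  using quasi unfolding quasi_intw_def bar_map_def by blast

lemma Flin1: "clinear (\<lambda>w1. F w1 w2 k)"
  using quasi unfolding quasi_intw_def bar_map_def by blast

lemma Flin2: "clinear (\<lambda>w2. F w1 w2 k)"
  using quasi unfolding quasi_intw_def bar_map_def by blast

lemma F0_1: "F 0 w2 k = 0" using clinear_zero[OF Flin1] .
lemma F0_2: "F w1 0 k = 0" using clinear_zero[OF Flin2] .
lemma Fscale1: "F (a *\<^sub>C x) w2 k = a *\<^sub>C F x w2 k" using clinear_scale[OF Flin1] .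
lemma Fscale2: "F w1 (a *\<^sub>C x) k = a *\<^sub>C F w1 x k" using clinear_scale[OF Flin2] .
lemma Fadd1: "F (x + y) w2 k = F x w2 k + F y w2 k" using clinear_add[OF Flin1] .
lemma Fadd2: "F w1 (x + y) k = F w1 x k + F w1 y k" using clinear_add[OF Flin2] .

lemma quasi_eq:
  "(\<lambda>n. bar_mode Y3 om v (-k-1) (F w1 w2) n - F w1 (Y2 v (-k-1) w2) n)
     = bar_mult (dB z) (\<lambda>(a,b). if b = 0 then F (Y1 v (-a-1) w1) w2 else (\<lambda>_. 0)) (-1, k)"
  using quasi unfolding quasi_intw_def by blast

definition gA where "gA u w1 w2 = (\<lambda>(a,b). if a = 0 then bar_mode Y3 om u (-b-1) (F w1 w2) else (\<lambda>_. 0))"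
definition gB where "gB u w1 w2 = (\<lambda>(a,b). if b = 0 then F (Y1 u (-a-1) w1) w2 else (\<lambda>_. 0))"
definition gC where "gC u w1 w2 = (\<lambda>(a,b). if a = 0 then F w1 (Y2 u (-b-1) w2) else (\<lambda>_. 0))"

definition LHS where "LHS u w1 w2 t = bar_mult (dA z) (gA u w1 w2) t"
definition R1 where "R1 u w1 w2 t = bar_mult (dB z) (gB u w1 w2) t"
definition R2 where "R2 u w1 w2 t = bar_mult (dC z) (gC u w1 w2) t"
definition Jd where "Jd u w1 w2 t = (\<lambda>k. LHS u w1 w2 t k - R1 u w1 w2 t k - R2 u w1 w2 t k)"

lemma gA_bar: "gA u w1 w2 s \<in> Wbar Y3 om"
  unfolding gA_def by (cases s) (auto intro: M3.bar_mode_Wbar M3.Wbar_zero)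
lemma gB_bar: "gB u w1 w2 s \<in> Wbar Y3 om"
  unfolding gB_def by (cases s) (auto intro: Fbar M3.Wbar_zero)
lemma gC_bar: "gC u w1 w2 s \<in> Wbar Y3 om"
  unfolding gC_def by (cases s) (auto intro: Fbar M3.Wbar_zero)

lemma LHS_bar: "LHS u w1 w2 t \<in> Wbar Y3 om"
  unfolding LHS_def by (rule M3.bar_mult_Wbar[OF gA_bar])
lemma R1_bar: "R1 u w1 w2 t \<in> Wbar Y3 om"
  unfolding R1_def by (rule M3.bar_mult_Wbar[OF gB_bar])
lemma R2_bar: "R2 u w1 w2 t \<in> Wbar Y3 om"
  unfolding R2_def by (rule M3.bar_mult_Wbar[OF gC_bar])
lemma Jd_bar: "Jd u w1 w2 t \<in> Wbar Y3 om"
  unfolding Jd_def by (intro M3.Wbar_diff LHS_bar R1_bar R2_bar)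

lemma suppA: "fsupp (\<lambda>s. dA z s *\<^sub>C gA u w1 w2 (fst t - fst s, snd t - snd s) k)"
proof -
  obtain M where M: "\<And>f m. f \<in> Wbar Y3 om \<Longrightarrow> m \<le> M \<Longrightarrow> bar_mode Y3 om u m f k = 0"
    using M3.bar_mode_low[of u k] by blast
  show ?thesis
  proof (rule fsuppI[of "{fst t} \<times> {M + snd t .. - 1 - fst t}"])
    fix s :: "int \<times> int"
    assume s: "s \<notin> {fst t} \<times> {M + snd t .. - 1 - fst t}"
    show "dA z s *\<^sub>C gA u w1 w2 (fst t - fst s, snd t - snd s) k = 0"
    proof (cases "fst s = fst t \<and> dA z s \<noteq> 0")
      case True
      then have "fst s + snd s \<le> -1" using dA_supp by blast
      moreover have "snd s \<notin> {M + snd t .. - 1 - fst t}" using s True by (cases s) auto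
      ultimately have "snd s < M + snd t" using True by auto
      then have "bar_mode Y3 om u (- (snd t - snd s) - 1) (F w1 w2) k = 0" using M[OF Fbar] by simp
      then show ?thesis using True unfolding gA_def by simp
    next
      case False
      then show ?thesis unfolding gA_def by auto
    qed
  qed simp
qed

lemma suppB: "fsupp (\<lambda>s. dB z s *\<^sub>C gB u w1 w2 (fst t - fst s, snd t - snd s) k)"
proof -
  obtain N where N: "\<And>m. m \<ge> N \<Longrightarrow> Y1 u m w1 = 0" using M1.Wtrunc by blast
  show ?thesis
  proof (rule fsuppI[of "{0 .. N + fst t} \<times> {snd t}"])
    fix s :: "int \<times> int"
    assume s: "s \<notin> {0 .. N + fst t} \<times> {snd t}"
    show "dB z s *\<^sub>C gB u w1 w2 (fst t - fst s, snd t - snd s) k = 0"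
    proof (cases "snd s = snd t \<and> dB z s \<noteq> 0")
      case True
      then have "fst s \<ge> 0" using dB_supp by blast
      moreover have "fst s \<notin> {0 .. N + fst t}" using s True by (cases s) auto
      ultimately have "fst s > N + fst t" by auto
      then have "Y1 u (- (fst t - fst s) - 1) w1 = 0" using N by simp
      then show ?thesis using True unfolding gB_def by (simp add: F0_1)
    next
      case False
      then show ?thesis unfolding gB_def by auto
    qed
  qed simp
qed

lemma suppC: "fsupp (\<lambda>s. dC z s *\<^sub>C gC u w1 w2 (fst t - fst s, snd t - snd s) k)"
proof -
  obtain N where N: "\<And>m. m \<ge> N \<Longrightarrow> Y2 u m w2 = 0" using M2.Wtrunc by blast
  show ?thesis
  proof (rule fsuppI[of "{fst t} \<times> {0 .. N + snd t}"])
    fix s :: "int \<times> int"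
    assume s: "s \<notin> {fst t} \<times> {0 .. N + snd t}"
    show "dC z s *\<^sub>C gC u w1 w2 (fst t - fst s, snd t - snd s) k = 0"
    proof (cases "fst s = fst t \<and> dC z s \<noteq> 0")
      case True
      then have "snd s \<ge> 0" using dC_supp by blast
      moreover have "snd s \<notin> {0 .. N + snd t}" using s True by (cases s) auto
      ultimately have "snd s > N + snd t" by auto
      then have "Y2 u (- (snd t - snd s) - 1) w2 = 0" using N by simp
      then show ?thesis using True unfolding gC_def by (simp add: F0_2)
    next
      case False
      then show ?thesis unfolding gC_def by auto
    qed
  qed simp
qed

end



context setting begin

lemma P_LHS:
  assumes a: "\<alpha> \<in> gdual Y3 om"
  shows "pair \<alpha> (LHS u w1 w2 t) = fsum (\<lambda>s. dA z s *
     (if fst t - fst s = 0 then pair \<alpha> (bar_mode Y3 om u (-(snd t - snd s) - 1) (F w1 w2)) else 0))"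
  unfolding LHS_def M3.PB[OF a gA_bar suppA] ser_mult_def
  by (rule fsum_cong) (simp add: gA_def M3.pair_zero[OF a])

lemma P_R1:
  assumes a: "\<alpha> \<in> gdual Y3 om"
  shows "pair \<alpha> (R1 u w1 w2 t) = fsum (\<lambda>s. dB z s *
     (if snd t - snd s = 0 then pair \<alpha> (F (Y1 u (-(fst t - fst s) - 1) w1) w2) else 0))"
  unfolding R1_def M3.PB[OF a gB_bar suppB] ser_mult_def
  by (rule fsum_cong) (simp add: gB_def M3.pair_zero[OF a])

lemma P_R2:
  assumes a: "\<alpha> \<in> gdual Y3 om"
  shows "pair \<alpha> (R2 u w1 w2 t) = fsum (\<lambda>s. dC z s *
     (if fst t - fst s = 0 then pair \<alpha> (F w1 (Y2 u (-(snd t - snd s) - 1) w2)) else 0))"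
  unfolding R2_def M3.PB[OF a gC_bar suppC] ser_mult_def
  by (rule fsum_cong) (simp add: gC_def M3.pair_zero[OF a])

lemma scale_swap: "d *\<^sub>C (a *\<^sub>C (y::'x::cvs)) = a *\<^sub>C (d *\<^sub>C y)"
  by (simp add: scaleC_scaleC mult.commute)

lemma LHS_scale: "LHS (a *\<^sub>C u) w1 w2 t k = a *\<^sub>C LHS u w1 w2 t k"
proof -
  have g: "gA (a *\<^sub>C u) w1 w2 x k = a *\<^sub>C gA u w1 w2 x k" for x
    unfolding gA_def by (cases x) (simp add: M3.bar_mode_scale)
  show ?thesis unfolding LHS_def bar_mult_def ser_mult_def g
    by (simp only: scale_swap fsum_scaleC)
qed

lemma R1_scale: "R1 (a *\<^sub>C u) w1 w2 t k = a *\<^sub>C R1 u w1 w2 t k"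
proof -
  have g: "gB (a *\<^sub>C u) w1 w2 x k = a *\<^sub>C gB u w1 w2 x k" for x
    unfolding gB_def by (cases x) (simp add: M1.Wscale1 Fscale1)
  show ?thesis unfolding R1_def bar_mult_def ser_mult_def g
    by (simp only: scale_swap fsum_scaleC)
qed

lemma R2_scale: "R2 (a *\<^sub>C u) w1 w2 t k = a *\<^sub>C R2 u w1 w2 t k"
proof -
  have g: "gC (a *\<^sub>C u) w1 w2 x k = a *\<^sub>C gC u w1 w2 x k" for x
    unfolding gC_def by (cases x) (simp add: M2.Wscale1 Fscale2)
  show ?thesis unfolding R2_def bar_mult_def ser_mult_def g
    by (simp only: scale_swap fsum_scaleC)
qed

lemma LHS_add: "LHS (u + v) w1 w2 t k = LHS u w1 w2 t k + LHS v w1 w2 t k"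
proof -
  have g: "gA (u + v) w1 w2 x k = gA u w1 w2 x k + gA v w1 w2 x k" for x
    unfolding gA_def by (cases x) (simp add: M3.bar_mode_add[OF Fbar])
  have "LHS (u + v) w1 w2 t k = fsum (\<lambda>s. dA z s *\<^sub>C gA u w1 w2 (fst t - fst s, snd t - snd s) k
      + dA z s *\<^sub>C gA v w1 w2 (fst t - fst s, snd t - snd s) k)"
    unfolding LHS_def bar_mult_def ser_mult_def g by (simp only: scaleC_add_right)
  also have "\<dots> = LHS u w1 w2 t k + LHS v w1 w2 t k"
    unfolding LHS_def bar_mult_def ser_mult_def by (rule fsum_add[OF suppA suppA])
  finally show ?thesis .
qed

lemma R1_add: "R1 (u + v) w1 w2 t k = R1 u w1 w2 t k + R1 v w1 w2 t k"
proof -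
  have g: "gB (u + v) w1 w2 x k = gB u w1 w2 x k + gB v w1 w2 x k" for x
    unfolding gB_def by (cases x) (simp add: M1.Wadd1 Fadd1)
  have "R1 (u + v) w1 w2 t k = fsum (\<lambda>s. dB z s *\<^sub>C gB u w1 w2 (fst t - fst s, snd t - snd s) k
      + dB z s *\<^sub>C gB v w1 w2 (fst t - fst s, snd t - snd s) k)"
    unfolding R1_def bar_mult_def ser_mult_def g by (simp only: scaleC_add_right)
  also have "\<dots> = R1 u w1 w2 t k + R1 v w1 w2 t k"
    unfolding R1_def bar_mult_def ser_mult_def by (rule fsum_add[OF suppB suppB])
  finally show ?thesis .
qed

lemma R2_add: "R2 (u + v) w1 w2 t k = R2 u w1 w2 t k + R2 v w1 w2 t k"
proof -
  have g: "gC (u + v) w1 w2 x k = gC u w1 w2 x k + gC v w1 w2 x k" for x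
    unfolding gC_def by (cases x) (simp add: M2.Wadd1 Fadd2)
  have "R2 (u + v) w1 w2 t k = fsum (\<lambda>s. dC z s *\<^sub>C gC u w1 w2 (fst t - fst s, snd t - snd s) k
      + dC z s *\<^sub>C gC v w1 w2 (fst t - fst s, snd t - snd s) k)"
    unfolding R2_def bar_mult_def ser_mult_def g by (simp only: scaleC_add_right)
  also have "\<dots> = R2 u w1 w2 t k + R2 v w1 w2 t k"
    unfolding R2_def bar_mult_def ser_mult_def by (rule fsum_add[OF suppC suppC])
  finally show ?thesis .
qed

lemma Jd_scale: "Jd (a *\<^sub>C u) w1 w2 t k = a *\<^sub>C Jd u w1 w2 t k"
  unfolding Jd_def by (simp add: LHS_scale R1_scale R2_scale scaleC_diff_right)

lemma Jd_add: "Jd (u + v) w1 w2 t k = Jd u w1 w2 t k + Jd v w1 w2 t k"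
  unfolding Jd_def by (simp add: LHS_add R1_add R2_add algebra_simps)

lemma Jd_zero: "Jd 0 w1 w2 t k = 0"
  using Jd_scale[of 0 0 w1 w2 t k] by simp

lemma Jd_sum: "Jd (sum f H) w1 w2 t k = (\<Sum>h\<in>H. Jd (f h) w1 w2 t k)"
  by (induction H rule: infinite_finite_induct) (simp_all add: Jd_zero Jd_add)

end



lemma bound_below:
  assumes "finite C" "\<And>c. \<exists>M::int. \<forall>m\<le>M. P c m"
  shows "\<exists>M. \<forall>c\<in>C. \<forall>m\<le>M. P c m"
proof -
  obtain M where M: "\<And>c m. m \<le> M c \<Longrightarrow> P c m" using assms(2) by metis
  define M0 where "M0 = Min (insert 0 (M ` C))"
  have "\<forall>c\<in>C. \<forall>m\<le>M0. P c m"
  proof (intro ballI allI impI)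
    fix c m assume c: "c \<in> C" and m: "m \<le> M0"
    have "M0 \<le> M c" unfolding M0_def using assms(1) c by (intro Min_le) auto
    then show "P c m" using M m by simp
  qed
  then show ?thesis by blast
qed

lemma bound_above:
  assumes "finite C" "\<And>c. \<exists>N::int. \<forall>m\<ge>N. P c m"
  shows "\<exists>N. \<forall>c\<in>C. \<forall>m\<ge>N. P c m"
proof -
  have "\<exists>M. \<forall>c\<in>C. \<forall>m\<le>M. P c (- m)"
  proof (rule bound_below[OF assms(1)])
    fix c
    obtain N where N: "\<forall>m\<ge>N. P c m" using assms(2) by blast
    have "\<forall>m\<le>- N. P c (- m)" using N by simp
    then show "\<exists>M. \<forall>m\<le>M. P c (- m)" by blast
  qed
  then obtain M where "\<forall>c\<in>C. \<forall>m\<le>M. P c (- m)" by blast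
  then have "\<forall>c\<in>C. \<forall>m\<ge>- M. P c m"
    by (metis minus_le_iff minus_minus)
  then show ?thesis by blast
qed

lemma fsum_flip: "fsum (\<lambda>s::int\<times>int. f s) = fsum (\<lambda>s. f (fst s, - snd s))"
proof -
  have "(\<lambda>s::int\<times>int. (fst s, - snd s)) \<circ> (\<lambda>s::int\<times>int. (fst s, - snd s)) = id"
    by (auto simp: comp_def)
  then have "bij (\<lambda>s::int\<times>int. (fst s, - snd s))" using o_bij by blast
  then show ?thesis using fsum_reindex_bij[of "\<lambda>s. (fst s, - snd s)" f] by simp
qed

lemma dA'_flip': "dA' z s = dA z (fst s, - snd s)" by (cases s) (simp add: dA'_flip)
lemma dB'_flip': "dB' z s = dB z (fst s, - snd s)" by (cases s) (simp add: dB'_flip)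
lemma dC'_flip': "dC' z s = dC z (fst s, - snd s)" by (cases s) (simp add: dC'_flip)

context setting begin

definition lam where "lam \<alpha> = (\<lambda>w1 w2. pair \<alpha> (F w1 w2))"

definition opp where "opp v e = opp_ser Y om v e"

lemma F0_fun: "F 0 w2 = (\<lambda>_. 0)" using F0_1 by auto
lemma F0_fun2: "F w1 0 = (\<lambda>_. 0)" using F0_2 by auto

lemma lam0_1: "\<alpha> \<in> gdual Y3 om \<Longrightarrow> lam \<alpha> 0 w2 = 0"
  unfolding lam_def F0_fun by (rule M3.pair_zero)
lemma lam0_2: "\<alpha> \<in> gdual Y3 om \<Longrightarrow> lam \<alpha> w1 0 = 0"
  unfolding lam_def F0_fun2 by (rule M3.pair_zero)

lemma opp_finC: "\<exists>C. finite C \<and> (\<forall>e. e \<notin> C \<longrightarrow> opp v e = 0)"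
  unfolding opp_def by (rule M1.opp_fin)

lemma Plow:
  assumes a: "\<alpha> \<in> gdual Y3 om"
  shows "\<exists>M. \<forall>f\<in>Wbar Y3 om. \<forall>m\<le>M. pair \<alpha> (bar_mode Y3 om u m f) = 0"
proof -
  let ?S = "asupp Y3 om \<alpha>"
  have "\<exists>M. \<forall>k\<in>?S. \<forall>m\<le>M. \<forall>f\<in>Wbar Y3 om. bar_mode Y3 om u m f k = 0"
    by (rule bound_below[OF M3.gdual_D(2)[OF a]]) (use M3.bar_mode_low in blast)
  then obtain M where M: "\<And>k m f. k \<in> ?S \<Longrightarrow> m \<le> M \<Longrightarrow> f \<in> Wbar Y3 om \<Longrightarrow> bar_mode Y3 om u m f k = 0"
    by blast
  have "pair \<alpha> (bar_mode Y3 om u m f) = 0" if "m \<le> M" "f \<in> Wbar Y3 om" for m f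
    using M that clinear_zero[OF M3.gdual_D(1)[OF a]]
    by (simp add: M3.pair_eq[OF a M3.bar_mode_Wbar])
  then show ?thesis by blast
qed

lemma quasiP:
  assumes a: "\<alpha> \<in> gdual Y3 om"
  shows "pair \<alpha> (bar_mode Y3 om u (-k-1) (F w1 w2)) - lam \<alpha> w1 (Y2 u (-k-1) w2) = pair \<alpha> (R1 u w1 w2 (-1, k))"
proof -
  have "pair \<alpha> (\<lambda>n. bar_mode Y3 om u (-k-1) (F w1 w2) n - F w1 (Y2 u (-k-1) w2) n)
      = pair \<alpha> (bar_mode Y3 om u (-k-1) (F w1 w2)) - pair \<alpha> (F w1 (Y2 u (-k-1) w2))"
    by (rule M3.pair_diff[OF a M3.bar_mode_Wbar Fbar])
  moreover have "(\<lambda>n. bar_mode Y3 om u (-k-1) (F w1 w2) n - F w1 (Y2 u (-k-1) w2) n) = R1 u w1 w2 (-1, k)"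
    unfolding R1_def gB_def by (rule quasi_eq)
  ultimately show ?thesis unfolding lam_def by simp
qed

definition T1f where "T1f v \<alpha> T w1 w2 = ser_mult (dB' z) (\<lambda>(a,b). lam \<alpha> (Y1 (opp_ser Y om v b) (-a-1) w1) w2) T"
definition T2f where "T2f v \<alpha> T w1 w2 = ser_mult (dC' z)
  (\<lambda>(a,b). if a = 0 then fsum (\<lambda>e. lam \<alpha> w1 (Y2 (opp_ser Y om v e) (b - e - 1) w2)) else 0) T"

lemma tau_delta_eq: "tau_delta Y om z Y1 Y2 v (lam \<alpha>) T w1 w2 = T1f v \<alpha> T w1 w2 + T2f v \<alpha> T w1 w2"
  unfolding tau_delta_def T1f_def T2f_def ..

lemma E1:
  assumes a: "\<alpha> \<in> gdual Y3 om"
  shows "T1f v \<alpha> T w1 w2 = fsum (\<lambda>e. pair \<alpha> (R1 (opp v e) w1 w2 (fst T, e - snd T)))"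
proof -
  obtain C where C: "finite C" "\<And>e. e \<notin> C \<Longrightarrow> opp v e = 0" using opp_finC by blast
  have "\<exists>N. \<forall>e\<in>C. \<forall>m\<ge>N. Y1 (opp v e) m w1 = 0"
    by (rule bound_above[OF C(1)]) (rule M1.Wtrunc)
  then obtain N where N: "\<And>e m. e \<in> C \<Longrightarrow> m \<ge> N \<Longrightarrow> Y1 (opp v e) m w1 = 0" by blast
  define f where "f = (\<lambda>e s. dB z s * (if (e - snd T) - snd s = 0
      then lam \<alpha> (Y1 (opp v e) (-(fst T - fst s) - 1) w1) w2 else 0))"
  have R: "pair \<alpha> (R1 (opp v e) w1 w2 (fst T, e - snd T)) = fsum (f e)" for e
    unfolding P_R1[OF a] f_def lam_def by (simp cong: if_cong)
  have fz: "f e s = 0" if "e \<notin> C \<or> s \<notin> {0 .. N + fst T} \<times> ((\<lambda>e. e - snd T) ` C)" for e s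
  proof (cases "e \<in> C \<and> (e - snd T) - snd s = 0 \<and> dB z s \<noteq> 0")
    case True
    then have s0: "fst s \<ge> 0" using dB_supp by blast
    have "snd s \<in> (\<lambda>e. e - snd T) ` C" using True by force
    then have "fst s \<notin> {0 .. N + fst T}" using that True by (cases s) auto
    then have "-(fst T - fst s) - 1 \<ge> N" using s0 by auto
    then show ?thesis unfolding f_def using N True lam0_1[OF a] by simp
  next
    case False
    then show ?thesis unfolding f_def using that C(2) lam0_1[OF a] M1.Wzero1 by auto
  qed
  have "fsum (\<lambda>e. fsum (f e)) = fsum (\<lambda>s. fsum (\<lambda>e. f e s))"
    by (rule fsum_swap[OF C(1), of "{0 .. N + fst T} \<times> ((\<lambda>e. e - snd T) ` C)"]) (use C(1) fz in auto)
  also have "\<dots> = fsum (\<lambda>s. dB z s * lam \<alpha> (Y1 (opp v (snd T + snd s)) (-(fst T - fst s) - 1) w1) w2)"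
    by (rule fsum_cong, subst fsum_single[where x="snd T + snd _"]) (auto simp: f_def)
  also have "\<dots> = fsum (\<lambda>s. dB z (fst s, - snd s) * lam \<alpha> (Y1 (opp v (snd T - snd s)) (-(fst T - fst s) - 1) w1) w2)"
    by (subst fsum_flip) simp
  also have "\<dots> = T1f v \<alpha> T w1 w2"
    unfolding T1f_def ser_mult_def by (rule fsum_cong) (simp add: dB'_flip' opp_def case_prod_beta)
  finally show ?thesis using R by simp
qed

end



lemma fsum_pull:
  "fsum (\<lambda>e. d * (if P then X e else 0)) = d * (if P then fsum X else (0::complex))"
  by (cases P) (simp_all add: fsum_scaleC[of d X, simplified])

context setting begin

lemma R1_zero: "R1 0 w1 w2 t = (\<lambda>_. 0)"
  using R1_scale[of 0 0 w1 w2 t] by auto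
lemma R2_zero: "R2 0 w1 w2 t = (\<lambda>_. 0)"
  using R2_scale[of 0 0 w1 w2 t] by auto
lemma LHS_zero: "LHS 0 w1 w2 t = (\<lambda>_. 0)"
  using LHS_scale[of 0 0 w1 w2 t] by auto
lemma bar_mode_zero_fun: "bar_mode Y3 om 0 m f = (\<lambda>_. 0)"
  using M3.bar_mode_zero by auto

lemma T2res:
  "T2f v \<alpha> (-1, B) w1 w2 = fsum (\<lambda>e. lam \<alpha> w1 (Y2 (opp v e) (B - e - 1) w2))"
  unfolding T2f_def ser_mult_def
proof (subst fsum_single[where x="(-1, 0)"])
  fix s :: "int \<times> int" assume s: "s \<noteq> (-1, 0)"
  show "dC' z s *\<^sub>C (case (fst (-1, B) - fst s, snd (-1, B) - snd s) of
          (a, b) \<Rightarrow> if a = 0 then fsum (\<lambda>e. lam \<alpha> w1 (Y2 (opp_ser Y om v e) (b - e - 1) w2)) else 0) = 0"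
  proof (cases "fst s = -1")
    case True
    then have "snd s \<noteq> 0" using s by (cases s) auto
    then have "dC' z s = 0" using True by (simp add: dC'_flip' dC_res)
    then show ?thesis by simp
  next
    case False
    then show ?thesis by simp
  qed
next
  show "dC' z (-1, 0) *\<^sub>C (case (fst (-1::int, B) - fst (-1::int, 0::int), snd (-1, B) - snd (-1::int, 0::int)) of
          (a, b) \<Rightarrow> if a = 0 then fsum (\<lambda>e. lam \<alpha> w1 (Y2 (opp_ser Y om v e) (b - e - 1) w2)) else 0) =
        fsum (\<lambda>e. lam \<alpha> w1 (Y2 (opp v e) (B - e - 1) w2))"
    by (simp add: dC'_flip dC_res opp_def)
qed

lemma Q:
  assumes a: "\<alpha> \<in> gdual Y3 om"
  shows "tau_Y Y om z Y1 Y2 v (lam \<alpha>) B w1 w2 = fsum (\<lambda>e. pair \<alpha> (bar_mode Y3 om (opp v e) (B - e - 1) (F w1 w2)))"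
proof -
  obtain C where C: "finite C" "\<And>e. e \<notin> C \<Longrightarrow> opp v e = 0" using opp_finC by blast
  have q: "pair \<alpha> (R1 (opp v e) w1 w2 (-1, e - B)) =
      pair \<alpha> (bar_mode Y3 om (opp v e) (B - e - 1) (F w1 w2)) - lam \<alpha> w1 (Y2 (opp v e) (B - e - 1) w2)" for e
    using quasiP[OF a, of "opp v e" "e - B" w1 w2] by simp
  have "tau_Y Y om z Y1 Y2 v (lam \<alpha>) B w1 w2 = T1f v \<alpha> (-1, B) w1 w2 + T2f v \<alpha> (-1, B) w1 w2"
    unfolding tau_Y_def tau_delta_eq ..
  also have "\<dots> = fsum (\<lambda>e. pair \<alpha> (R1 (opp v e) w1 w2 (-1, e - B))) + fsum (\<lambda>e. lam \<alpha> w1 (Y2 (opp v e) (B - e - 1) w2))"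
    by (simp add: E1[OF a] T2res)
  also have "\<dots> = (\<Sum>e\<in>C. pair \<alpha> (R1 (opp v e) w1 w2 (-1, e - B))) + (\<Sum>e\<in>C. lam \<alpha> w1 (Y2 (opp v e) (B - e - 1) w2))"
  proof -
    have 1: "fsum (\<lambda>e. pair \<alpha> (R1 (opp v e) w1 w2 (-1, e - B))) = (\<Sum>e\<in>C. pair \<alpha> (R1 (opp v e) w1 w2 (-1, e - B)))"
      by (rule fsum_eq_sum[OF C(1)]) (simp add: C(2) R1_zero M3.pair_zero[OF a])
    have 2: "fsum (\<lambda>e. lam \<alpha> w1 (Y2 (opp v e) (B - e - 1) w2)) = (\<Sum>e\<in>C. lam \<alpha> w1 (Y2 (opp v e) (B - e - 1) w2))"
      by (rule fsum_eq_sum[OF C(1)]) (simp add: C(2) M2.Wzero1 lam0_2[OF a])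
    show ?thesis unfolding 1 2 ..
  qed
  also have "\<dots> = (\<Sum>e\<in>C. pair \<alpha> (bar_mode Y3 om (opp v e) (B - e - 1) (F w1 w2)))"
    by (simp add: q sum.distrib[symmetric])
  also have "\<dots> = fsum (\<lambda>e. pair \<alpha> (bar_mode Y3 om (opp v e) (B - e - 1) (F w1 w2)))"
    by (rule fsum_eq_sum[symmetric, OF C(1)]) (simp add: C(2) bar_mode_zero_fun M3.pair_zero[OF a])
  finally show ?thesis .
qed

lemma TauLow:
  assumes a: "\<alpha> \<in> gdual Y3 om"
  shows "\<exists>B0. \<forall>b\<le>B0. \<forall>w1 w2. fsum (\<lambda>e. pair \<alpha> (bar_mode Y3 om (opp v e) (b - e - 1) (F w1 w2))) = 0"
proof -
  obtain C where C: "finite C" "\<And>e. e \<notin> C \<Longrightarrow> opp v e = 0" using opp_finC by blast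
  have "\<exists>M. \<forall>e\<in>C. \<forall>m\<le>M. \<forall>f\<in>Wbar Y3 om. pair \<alpha> (bar_mode Y3 om (opp v e) m f) = 0"
    by (rule bound_below[OF C(1)]) (use Plow[OF a] in blast)
  then obtain M where M: "\<And>e m f. e \<in> C \<Longrightarrow> m \<le> M \<Longrightarrow> f \<in> Wbar Y3 om \<Longrightarrow> pair \<alpha> (bar_mode Y3 om (opp v e) m f) = 0"
    by blast
  define e0 where "e0 = Min (insert 0 C)"
  have e0: "e \<in> C \<Longrightarrow> e0 \<le> e" for e unfolding e0_def using C(1) by (intro Min_le) auto
  have "fsum (\<lambda>e. pair \<alpha> (bar_mode Y3 om (opp v e) (b - e - 1) (F w1 w2))) = 0" if "b \<le> M + 1 + e0" for b w1 w2
  proof (rule fsum_zero')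
    fix e
    show "pair \<alpha> (bar_mode Y3 om (opp v e) (b - e - 1) (F w1 w2)) = 0"
    proof (cases "e \<in> C")
      case True
      then show ?thesis using M[OF True _ Fbar] e0[OF True] that by simp
    next
      case False
      then show ?thesis using C(2) bar_mode_zero_fun M3.pair_zero[OF a] by simp
    qed
  qed
  then show ?thesis by blast
qed

lemma E2:
  assumes a: "\<alpha> \<in> gdual Y3 om"
  shows "T2f v \<alpha> T w1 w2 = fsum (\<lambda>e. pair \<alpha> (R2 (opp v e) w1 w2 (fst T, e - snd T)))"
proof -
  obtain C where C: "finite C" "\<And>e. e \<notin> C \<Longrightarrow> opp v e = 0" using opp_finC by blast
  have "\<exists>N. \<forall>e\<in>C. \<forall>m\<ge>N. Y2 (opp v e) m w2 = 0"
    by (rule bound_above[OF C(1)]) (rule M2.Wtrunc)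
  then obtain N where N: "\<And>e m. e \<in> C \<Longrightarrow> m \<ge> N \<Longrightarrow> Y2 (opp v e) m w2 = 0" by blast
  define e1 where "e1 = Max (insert 0 C)"
  have e1: "e \<in> C \<Longrightarrow> e \<le> e1" for e unfolding e1_def using C(1) by (intro Max_ge) auto
  define f where "f = (\<lambda>e s. dC z s * (if fst T - fst s = 0
      then lam \<alpha> w1 (Y2 (opp v e) (-((e - snd T) - snd s) - 1) w2) else 0))"
  have R: "pair \<alpha> (R2 (opp v e) w1 w2 (fst T, e - snd T)) = fsum (f e)" for e
    unfolding P_R2[OF a] f_def lam_def by (simp cong: if_cong)
  let ?B = "{fst T} \<times> {0 .. N - snd T + e1 + 1}"
  have fz: "f e s = 0" if "e \<notin> C \<or> s \<notin> ?B" for e s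
  proof (cases "e \<in> C \<and> fst T - fst s = 0 \<and> dC z s \<noteq> 0")
    case True
    then have s1: "snd s \<ge> 0" using dC_supp by blast
    have "snd s \<notin> {0 .. N - snd T + e1 + 1}" using that True by (cases s) auto
    then have "snd s > N - snd T + e1 + 1" using s1 by auto
    then have "-((e - snd T) - snd s) - 1 \<ge> N" using e1[of e] True by auto
    then show ?thesis unfolding f_def using N True lam0_2[OF a] by simp
  next
    case False
    then show ?thesis unfolding f_def using that C(2) lam0_2[OF a] M2.Wzero1 by auto
  qed
  have "fsum (\<lambda>e. fsum (f e)) = fsum (\<lambda>s. fsum (\<lambda>e. f e s))"
    by (rule fsum_swap[OF C(1), of ?B]) (use fz in auto)
  also have "\<dots> = fsum (\<lambda>s. dC z s * (if fst T - fst s = 0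
      then fsum (\<lambda>e. lam \<alpha> w1 (Y2 (opp v e) (snd T + snd s - e - 1) w2)) else 0))"
    unfolding f_def by (rule fsum_cong) (simp add: fsum_pull[symmetric] algebra_simps cong: if_cong)
  also have "\<dots> = fsum (\<lambda>s. dC z (fst s, - snd s) * (if fst T - fst s = 0
      then fsum (\<lambda>e. lam \<alpha> w1 (Y2 (opp v e) (snd T - snd s - e - 1) w2)) else 0))"
    by (subst fsum_flip) (simp cong: if_cong)
  also have "\<dots> = T2f v \<alpha> T w1 w2"
    unfolding T2f_def ser_mult_def by (rule fsum_cong) (simp add: dC'_flip' opp_def case_prod_beta)
  finally show ?thesis using R by simp
qed

lemma E3:
  assumes a: "\<alpha> \<in> gdual Y3 om"
  shows "ser_mult (dA' z) (\<lambda>(a,b). if a = 0 then tau_Y Y om z Y1 Y2 v (lam \<alpha>) b w1 w2 else 0) T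
     = fsum (\<lambda>e. pair \<alpha> (LHS (opp v e) w1 w2 (fst T, e - snd T)))"
proof -
  obtain C where C: "finite C" "\<And>e. e \<notin> C \<Longrightarrow> opp v e = 0" using opp_finC by blast
  have "\<exists>M. \<forall>e\<in>C. \<forall>m\<le>M. \<forall>f\<in>Wbar Y3 om. pair \<alpha> (bar_mode Y3 om (opp v e) m f) = 0"
    by (rule bound_below[OF C(1)]) (use Plow[OF a] in blast)
  then obtain M where M: "\<And>e m f. e \<in> C \<Longrightarrow> m \<le> M \<Longrightarrow> f \<in> Wbar Y3 om \<Longrightarrow> pair \<alpha> (bar_mode Y3 om (opp v e) m f) = 0"
    by blast
  define e0 where "e0 = Min (insert 0 C)"
  have e0: "e \<in> C \<Longrightarrow> e0 \<le> e" for e unfolding e0_def using C(1) by (intro Min_le) auto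
  define f where "f = (\<lambda>e s. dA z s * (if fst T - fst s = 0
      then pair \<alpha> (bar_mode Y3 om (opp v e) (-((e - snd T) - snd s) - 1) (F w1 w2)) else 0))"
  have R: "pair \<alpha> (LHS (opp v e) w1 w2 (fst T, e - snd T)) = fsum (f e)" for e
    unfolding P_LHS[OF a] f_def by (simp cong: if_cong)
  let ?B = "{fst T} \<times> {M - snd T + e0 .. - 1 - fst T}"
  have fz: "f e s = 0" if "e \<notin> C \<or> s \<notin> ?B" for e s
  proof (cases "e \<in> C \<and> fst T - fst s = 0 \<and> dA z s \<noteq> 0")
    case True
    then have s1: "fst s + snd s \<le> -1" using dA_supp by blast
    have "snd s \<notin> {M - snd T + e0 .. - 1 - fst T}" using that True by (cases s) auto
    then have "snd s < M - snd T + e0" using s1 True by auto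
    then have "-((e - snd T) - snd s) - 1 \<le> M" using e0[of e] True by auto
    then show ?thesis unfolding f_def using M[OF _ _ Fbar] True by simp
  next
    case False
    then show ?thesis unfolding f_def using that C(2) bar_mode_zero_fun M3.pair_zero[OF a] by auto
  qed
  have "fsum (\<lambda>e. fsum (f e)) = fsum (\<lambda>s. fsum (\<lambda>e. f e s))"
    by (rule fsum_swap[OF C(1), of ?B]) (use fz in auto)
  also have "\<dots> = fsum (\<lambda>s. dA z s * (if fst T - fst s = 0
      then fsum (\<lambda>e. pair \<alpha> (bar_mode Y3 om (opp v e) ((snd T + snd s) - e - 1) (F w1 w2))) else 0))"
    unfolding f_def by (rule fsum_cong) (simp add: fsum_pull[symmetric] algebra_simps cong: if_cong)
  also have "\<dots> = fsum (\<lambda>s. dA z s * (if fst T - fst s = 0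
      then tau_Y Y om z Y1 Y2 v (lam \<alpha>) (snd T + snd s) w1 w2 else 0))"
    by (simp add: Q[OF a] cong: if_cong)
  also have "\<dots> = fsum (\<lambda>s. dA z (fst s, - snd s) * (if fst T - fst s = 0
      then tau_Y Y om z Y1 Y2 v (lam \<alpha>) (snd T - snd s) w1 w2 else 0))"
    by (subst fsum_flip) (simp cong: if_cong)
  also have "\<dots> = ser_mult (dA' z) (\<lambda>(a,b). if a = 0 then tau_Y Y om z Y1 Y2 v (lam \<alpha>) b w1 w2 else 0) T"
    unfolding ser_mult_def by (rule fsum_cong) (simp add: dA'_flip' case_prod_beta)
  finally show ?thesis using R by simp
qed

end



context setting begin

lemma Jd_fun_scale: "Jd (a *\<^sub>C u) w1 w2 t = (\<lambda>k. a *\<^sub>C Jd u w1 w2 t k)"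
  by (rule ext, rule Jd_scale)

lemma Jd_fun_zero: "Jd 0 w1 w2 t = (\<lambda>_. 0)"
  by (rule ext, rule Jd_zero)

lemma sumJd:
  assumes a: "\<alpha> \<in> gdual Y3 om"
  shows "fsum (\<lambda>e. pair \<alpha> (Jd (opp v e) w1 w2 (fst T, e - snd T)))
    = ser_mult (dA' z) (\<lambda>(a,b). if a = 0 then tau_Y Y om z Y1 Y2 v (lam \<alpha>) b w1 w2 else 0) T
      - tau_delta Y om z Y1 Y2 v (lam \<alpha>) T w1 w2"
proof -
  obtain C where C: "finite C" "\<And>e. e \<notin> C \<Longrightarrow> opp v e = 0" using opp_finC by blast
  have pj: "pair \<alpha> (Jd u w1 w2 t) = pair \<alpha> (LHS u w1 w2 t) - pair \<alpha> (R1 u w1 w2 t) - pair \<alpha> (R2 u w1 w2 t)" for u t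
  proof -
    have "pair \<alpha> (Jd u w1 w2 t) = pair \<alpha> (\<lambda>k. LHS u w1 w2 t k - R1 u w1 w2 t k) - pair \<alpha> (R2 u w1 w2 t)"
      unfolding Jd_def by (rule M3.pair_diff[OF a M3.Wbar_diff[OF LHS_bar R1_bar] R2_bar])
    also have "pair \<alpha> (\<lambda>k. LHS u w1 w2 t k - R1 u w1 w2 t k) = pair \<alpha> (LHS u w1 w2 t) - pair \<alpha> (R1 u w1 w2 t)"
      by (rule M3.pair_diff[OF a LHS_bar R1_bar])
    finally show ?thesis .
  qed
  let ?L = "\<lambda>e. pair \<alpha> (LHS (opp v e) w1 w2 (fst T, e - snd T))"
  let ?A = "\<lambda>e. pair \<alpha> (R1 (opp v e) w1 w2 (fst T, e - snd T))"
  let ?B = "\<lambda>e. pair \<alpha> (R2 (opp v e) w1 w2 (fst T, e - snd T))"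
  have zL: "fsum ?L = sum ?L C"
    by (rule fsum_eq_sum[OF C(1)]) (simp add: C(2) LHS_zero M3.pair_zero[OF a])
  have zA: "fsum ?A = sum ?A C"
    by (rule fsum_eq_sum[OF C(1)]) (simp add: C(2) R1_zero M3.pair_zero[OF a])
  have zB: "fsum ?B = sum ?B C"
    by (rule fsum_eq_sum[OF C(1)]) (simp add: C(2) R2_zero M3.pair_zero[OF a])
  have zJ: "fsum (\<lambda>e. pair \<alpha> (Jd (opp v e) w1 w2 (fst T, e - snd T))) = sum (\<lambda>e. ?L e - ?A e - ?B e) C"
    by (subst fsum_eq_sum[OF C(1)]) (simp_all add: C(2) pj LHS_zero R1_zero R2_zero M3.pair_zero[OF a])
  have "sum (\<lambda>e. ?L e - ?A e - ?B e) C = sum ?L C - sum ?A C - sum ?B C"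
    by (simp add: sum_subtractf)
  also have "\<dots> = ser_mult (dA' z) (\<lambda>(a,b). if a = 0 then tau_Y Y om z Y1 Y2 v (lam \<alpha>) b w1 w2 else 0) T
      - (T1f v \<alpha> T w1 w2 + T2f v \<alpha> T w1 w2)"
    by (simp add: E1[OF a] E2[OF a] E3[OF a] zL zA zB)
  finally show ?thesis using zJ by (simp add: tau_delta_eq)
qed

lemma tau_trunc:
  assumes a: "\<alpha> \<in> gdual Y3 om"
  shows "\<exists>N. \<forall>n\<ge>N. tau_mode Y om z Y1 Y2 v n (lam \<alpha>) = (\<lambda>_ _. 0)"
proof -
  obtain B0 where B0: "\<And>b w1 w2. b \<le> B0 \<Longrightarrow> fsum (\<lambda>e. pair \<alpha> (bar_mode Y3 om (opp v e) (b - e - 1) (F w1 w2))) = 0"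
    using TauLow[OF a, of v] by blast
  have "tau_mode Y om z Y1 Y2 v n (lam \<alpha>) = (\<lambda>_ _. 0)" if "n \<ge> - B0 - 1" for n
  proof (intro ext)
    fix w1 w2
    show "tau_mode Y om z Y1 Y2 v n (lam \<alpha>) w1 w2 = 0"
      unfolding tau_mode_def Q[OF a] using B0[of "-n-1"] that by simp
  qed
  then show ?thesis by blast
qed

lemma Fdual_eq: "Fdual Y3 om F = {lam \<alpha> | \<alpha>. \<alpha> \<in> gdual Y3 om}"
  unfolding Fdual_def lam_def ..

lemma P_intw_iff_Jd: "P_intw om z Y1 Y2 Y3 F \<longleftrightarrow> (\<forall>u w1 w2 t k. Jd u w1 w2 t k = 0)"
proof -
  have "P_intw om z Y1 Y2 Y3 F \<longleftrightarrow> (\<forall>u w1 w2 t k. LHS u w1 w2 t k = R1 u w1 w2 t k + R2 u w1 w2 t k)"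
    unfolding P_intw_def LHS_def R1_def R2_def gA_def gB_def gC_def using quasi by simp
  also have "\<dots> \<longleftrightarrow> (\<forall>u w1 w2 t k. Jd u w1 w2 t k = 0)"
    unfolding Jd_def by (simp add: diff_diff_eq eq_diff_eq[symmetric] diff_eq_eq)
  finally show ?thesis .
qed

lemma dir1:
  assumes J: "\<And>u w1 w2 t k. Jd u w1 w2 t k = 0"
  shows "P_compatible_set Y om z Y1 Y2 (Fdual Y3 om F)"
  unfolding P_compatible_set_def Fdual_eq
proof (clarify)
  fix \<alpha> assume a: "\<alpha> \<in> gdual Y3 om"
  show "P_compatible Y om z Y1 Y2 (lam \<alpha>)"
    unfolding P_compatible_def
  proof (intro allI conjI)
    fix v
    show "\<exists>N. \<forall>n\<ge>N. tau_mode Y om z Y1 Y2 v n (lam \<alpha>) = (\<lambda>_ _. 0)" by (rule tau_trunc[OF a])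
    fix T w1 w2
    have "Jd (opp v e) w1 w2 (fst T, e - snd T) = (\<lambda>_. 0)" for e using J by auto
    then have "fsum (\<lambda>e. pair \<alpha> (Jd (opp v e) w1 w2 (fst T, e - snd T))) = 0"
      by (simp add: M3.pair_zero[OF a])
    then show "tau_delta Y om z Y1 Y2 v (lam \<alpha>) T w1 w2 =
        ser_mult (delta_ser (invm x0m) x1invm (negm (cm z)) x0m)
         (\<lambda>(a, b). if a = 0 then tau_Y Y om z Y1 Y2 v (lam \<alpha>) b w1 w2 else 0) T"
      using sumJd[OF a, of v w1 w2 T] by simp
  qed
qed

lemma hom_step:
  assumes comp: "P_compatible_set Y om z Y1 Y2 (Fdual Y3 om F)"
    and u: "u \<in> Vgr Y om h"
    and IH: "\<And>j u' w1 w2 t k. j \<ge> 1 \<Longrightarrow> u' \<in> Vgr Y om (h - int j) \<Longrightarrow> Jd u' w1 w2 t k = 0"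
  shows "Jd u w1 w2 t k = 0"
proof -
  have sum0: "fsum (\<lambda>e. pair \<alpha> (Jd (opp u e) w1 w2 (fst T, e - snd T))) = 0"
    if a: "\<alpha> \<in> gdual Y3 om" for \<alpha> T
  proof -
    have "lam \<alpha> \<in> Fdual Y3 om F" unfolding Fdual_eq using a by blast
    then have "P_compatible Y om z Y1 Y2 (lam \<alpha>)" using comp unfolding P_compatible_set_def by blast
    then have "tau_delta Y om z Y1 Y2 u (lam \<alpha>) T w1 w2 =
        ser_mult (delta_ser (invm x0m) x1invm (negm (cm z)) x0m)
         (\<lambda>(a, b). if a = 0 then tau_Y Y om z Y1 Y2 u (lam \<alpha>) b w1 w2 else 0) T"
      unfolding P_compatible_def by blast
    then show ?thesis using sumJd[OF a, of u w1 w2 T] by simp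
  qed
  have oh: "opp u e = (if e + 2 * h \<ge> 0
      then ((-1) powi h / of_nat (fact (nat (e + 2 * h)))) *\<^sub>C (Y om 2 ^^ nat (e + 2 * h)) u else 0)" for e
    unfolding opp_def by (rule M1.opp_hom[OF u])
  have single: "pair \<alpha> (Jd u w1 w2 (fst T, - 2 * h - snd T)) = 0" if a: "\<alpha> \<in> gdual Y3 om" for \<alpha> T
  proof -
    have other: "pair \<alpha> (Jd (opp u e) w1 w2 (fst T, e - snd T)) = 0" if e: "e \<noteq> - 2 * h" for e
    proof (cases "e + 2 * h \<ge> 0")
      case True
      then have j1: "nat (e + 2 * h) \<ge> 1" using e by linarith
      have mem: "(Y om 2 ^^ nat (e + 2 * h)) u \<in> Vgr Y om (h - int (nat (e + 2 * h)))"
        by (rule M1.L1_pow_lower[OF u])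
      have "Jd ((Y om 2 ^^ nat (e + 2 * h)) u) w1 w2 (fst T, e - snd T) = (\<lambda>_. 0)"
        using IH[OF j1 mem] by auto
      then show ?thesis using True by (simp add: oh Jd_fun_scale M3.pair_zero[OF a])
    next
      case False
      then show ?thesis by (simp add: oh Jd_fun_zero M3.pair_zero[OF a])
    qed
    have "fsum (\<lambda>e. pair \<alpha> (Jd (opp u e) w1 w2 (fst T, e - snd T))) =
        pair \<alpha> (Jd (opp u (- 2 * h)) w1 w2 (fst T, - 2 * h - snd T))"
      by (rule fsum_single) (use other in auto)
    also have "opp u (- 2 * h) = (-1) powi h *\<^sub>C u" by (simp add: oh)
    finally have "pair \<alpha> (Jd ((-1) powi h *\<^sub>C u) w1 w2 (fst T, - 2 * h - snd T)) = 0"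
      using sum0[OF a] by simp
    moreover have "pair \<alpha> (\<lambda>k. (-1) powi h *\<^sub>C Jd u w1 w2 (fst T, - 2 * h - snd T) k)
        = (-1) powi h * pair \<alpha> (Jd u w1 w2 (fst T, - 2 * h - snd T))"
      by (rule M3.pair_scale[OF a Jd_bar])
    ultimately have "(-1) powi h * pair \<alpha> (Jd u w1 w2 (fst T, - 2 * h - snd T)) = 0"
      by (simp only: Jd_fun_scale)
    then show ?thesis by simp
  qed
  have "pair \<alpha> (Jd u w1 w2 t) = 0" if a: "\<alpha> \<in> gdual Y3 om" for \<alpha>
    using single[OF a, of "(fst t, - 2 * h - snd t)"] by simp
  then show ?thesis by (rule M3.separate[OF Jd_bar])
qed

lemma dir2:
  assumes comp: "P_compatible_set Y om z Y1 Y2 (Fdual Y3 om F)"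
  shows "Jd u w1 w2 t k = 0"
proof -
  obtain K where K: "\<forall>n<K. Vgr Y om n = {0}" using M1.Vlow by blast
  have claim: "\<forall>h. h < K + int n \<longrightarrow> (\<forall>u\<in>Vgr Y om h. \<forall>w1 w2 t k. Jd u w1 w2 t k = 0)" for n
  proof (induction n)
    case 0
    show ?case
    proof (intro allI impI ballI)
      fix h u w1 w2 t k assume "h < K + int 0" "u \<in> Vgr Y om h"
      then have "u = 0" using K by auto
      then show "Jd u w1 w2 t k = 0" by (simp add: Jd_zero)
    qed
  next
    case (Suc n)
    show ?case
    proof (intro allI impI ballI)
      fix h u w1 w2 t k assume h: "h < K + int (Suc n)" and u: "u \<in> Vgr Y om h"
      show "Jd u w1 w2 t k = 0"
      proof (rule hom_step[OF comp u])
        fix j u' w1 w2 t k assume j: "(1::nat) \<le> j" and u': "u' \<in> Vgr Y om (h - int j)"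
        have "h - int j < K + int n" using h j by simp
        then show "Jd u' w1 w2 t k = 0" using Suc u' by blast
      qed
    qed
  qed
  obtain H where H: "finite H" "\<forall>h. h \<notin> H \<longrightarrow> dproj (Vgr Y om) h u = 0" using M1.Vfin by blast
  have "Jd u w1 w2 t k = (\<Sum>h\<in>H. Jd (dproj (Vgr Y om) h u) w1 w2 t k)"
    by (subst M1.Vdecomp[OF H]) (rule Jd_sum)
  also have "\<dots> = 0"
  proof (rule sum.neutral, rule ballI)
    fix h assume "h \<in> H"
    have "h < K + int (nat (h - K + 1))" by simp
    then show "Jd (dproj (Vgr Y om) h u) w1 w2 t k = 0" using claim M1.V.dproj_in by blast
  qed
  finally show ?thesis .
qed

lemma main: "P_compatible_set Y om z Y1 Y2 (Fdual Y3 om F) \<longleftrightarrow> P_intw om z Y1 Y2 Y3 F"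
  unfolding P_intw_iff_Jd using dir1 dir2 by blast

end



theorem mainTheorem6:
  fixes Y :: "'v::cvs \<Rightarrow> int \<Rightarrow> 'v \<Rightarrow> 'v" and vac om :: 'v and c z :: complex
    and Y1 :: "'v \<Rightarrow> int \<Rightarrow> 'a::cvs \<Rightarrow> 'a" and Y2 :: "'v \<Rightarrow> int \<Rightarrow> 'b::cvs \<Rightarrow> 'b"
    and Y3 :: "'v \<Rightarrow> int \<Rightarrow> 'c::cvs \<Rightarrow> 'c" and F :: "'a \<Rightarrow> 'b \<Rightarrow> complex \<Rightarrow> 'c"
  assumes "VOA Y vac om c"
    and "z \<noteq> 0"
    and "gen_module Y vac om Y1" and "gen_module Y vac om Y2" and "gen_module Y vac om Y3"
    and "quasi_intw om z Y1 Y2 Y3 F"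
  shows "P_compatible_set Y om z Y1 Y2 (Fdual Y3 om F) \<longleftrightarrow> P_intw om z Y1 Y2 Y3 F"
  proof -
  interpret setting Y vac om c Y1 Y2 Y3 z F
    by unfold_locales (use assms in auto)
  show ?thesis by (rule main)
qed

end
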